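(* Let $N$ and $L$ be integers with $1\le L\le N-1$, and let $\alpha>0$, $\delta_1>0$, $\delta_2>0$ with $\delta_1\neq\delta_2$. Let $z,y_1,y_2$ be independent random variables with $z\sim\mathrm{Gamma}(N-L,1)$ and $y_1,y_2\sim\mathrm{Gamma}(L,1)$, and set $$X=\frac{\alpha z}{1+\delta_1y_1+\delta_2y_2}.$$ Then $$\mathbb{E}\left[\ln(1+X)\right]=\sum_{i=0}^{N-L-1}\sum_{j=1}^2\sum_{k=0}^{L-1}\sum_{l=0}^i\frac{a_k^{(j)}(l+k)!}{l!(i-l)!}\,\alpha^{l+k-i+1}\,I_1\!\left(\frac{1}{\alpha},\frac{\alpha}{\delta_j},i,l+k+1\right),$$ where, for $0\le i\le L-1$, $$a^{(1)}_i=\frac{1}{\delta_1^{i+1}(L-1)!}\left(\frac{\delta_1}{\delta_1-\delta_2}\right)^L\frac{(2(L-1)-i)!}{i!(L-1-i)!}\left(\frac{\delta_2}{\delta_2-\delta_1}\right)^{L-1-i},$$ $$a^{(2)}_i=\frac{1}{\delta_2^{i+1}(L-1)!}\left(\frac{\delta_2}{\delta_2-\delta_1}\right)^L\frac{(2(L-1)-i)!}{i!(L-1-i)!}\left(\frac{\delta_1}{\delta_1-\delta_2}\right)^{L-1-i}.$$ (In particular the density of $\delta_1y_1+\delta_2y_2$ is $p(y)=\sum_{j=1}^2\sum_{k=0}^{L-1}a_k^{(j)}y^ke^{-y/\delta_j}$ for $y>0$, and the CDF of $X$ is $F_X(x)=1-\sum_{i=0}^{N-L-1}\sum_{j=1}^2\sum_{k=0}^{L-1}\sum_{l=0}^i\frac{a_k^{(j)}(l+k)!}{l!(i-l)!}\frac{\alpha^{l+k-i+1}e^{-x/\alpha}x^i}{(x+\alpha/\delta_j)^{l+k+1}}$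 for $x\ge0$.)
   Context: $\mathrm{Gamma}(n,1)$ denotes the distribution with density $t^{n-1}e^{-t}/(n-1)!$ on $t>0$ (equivalently, a chi-square variable with $2n$ degrees of freedom normalized to mean $n$; its CDF is $1-e^{-t}\sum_{i=0}^{n-1}t^i/i!$). For $a>0$, $b>0$ and nonnegative integers $m,n$, define $$I_1(a,b,m,n)=\int_0^\infty\frac{x^me^{-ax}}{(x+b)^n(x+1)}\,dx.$$ In the paper this models the SINR of a user under zero-forcing precoding with $N=N_t$ transmit antennas, $M=L+1$ active users, channel quantization and feedback delay. *)

theory Defs
  imports "HOL-Probability.Probability"
begin

text \<open>Gamma(n,1) density for n \<ge> 1: erlang_density (n-1) 1 from HOL-Probability,
  i.e. t^(n-1) e^(-t) / (n-1)! on t \<ge> 0.\<close>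
definition gamma_density :: "nat \<Rightarrow> real \<Rightarrow> real" where
  "gamma_density n = erlang_density (n - 1) 1"

definition I1 :: "real \<Rightarrow> real \<Rightarrow> nat \<Rightarrow> nat \<Rightarrow> real" where
  "I1 a b m n = (LBINT x:{0<..}. x ^ m * exp (- a * x) / ((x + b) ^ n * (x + 1)))"

definition coef :: "nat \<Rightarrow> real \<Rightarrow> real \<Rightarrow> nat \<Rightarrow> nat \<Rightarrow> real" where
  "coef L d1 d2 j i =
     (if j = 1 then
        1 / (d1 ^ (i + 1) * fact (L - 1)) * (d1 / (d1 - d2)) ^ L
        * fact (2 * (L - 1) - i) / (fact i * fact (L - 1 - i))
        * (d2 / (d2 - d1)) ^ (L - 1 - i)
      else
        1 / (d2 ^ (i + 1) * fact (L - 1)) * (d2 / (d2 - d1)) ^ L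
        * fact (2 * (L - 1) - i) / (fact i * fact (L - 1 - i))
        * (d1 / (d1 - d2)) ^ (L - 1 - i))"

definition delta :: "real \<Rightarrow> real \<Rightarrow> nat \<Rightarrow> real" where
  "delta d1 d2 j = (if j = 1 then d1 else d2)"

end

theory Submission
  imports Defs
begin


lemma l1: fixes x y C :: real assumes "k \<le> m" "L = m + 1"
  shows "y^L * (C * x^k * y^(m-k)) = C * x^k * y^(2*m+1-k)"
proof -
  have "2*m+1-k = L + (m-k)" using assms by simp
  then have "y^(2*m+1-k) = y^L * y^(m-k)" by (simp only: power_add)
  then show ?thesis by (simp only: mult_ac)
qed
lemma l2: fixes x y C D :: real assumes "k \<le> m" "L = m + 1" "C = D"
  shows "x^L * (C * y^k * x^(m-k)) = D * x^(2*m+1-k) * y^k"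
proof -
  have "2*m+1-k = L + (m-k)" using assms by simp
  then have "x^(2*m+1-k) = x^L * x^(m-k)" by (simp only: power_add)
  then show ?thesis using assms(3) by (simp only: mult_ac)
qed

lemma poly_id:
  fixes x y :: real and L :: nat
  assumes "1 \<le> L"
  shows "y^L * (\<Sum>j<L. of_nat (L - 1 + j choose j) * x^j * (x+y)^(L-1-j))
       + x^L * (\<Sum>j<L. of_nat (L - 1 + j choose j) * y^j * (x+y)^(L-1-j)) = (x+y)^(2*L-1)"
proof -
  define m where "m = L - 1"
  have L: "L = m + 1" using assms m_def by simp
  have key: "\<And>x y::real. (\<Sum>j<L. of_nat (L - 1 + j choose j) * x^j * (x+y)^(L-1-j))
       = (\<Sum>k\<le>m. of_nat (2*m+1 choose k) * x^k * y^(m-k))"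
  proof -
    fix x y :: real
    have "(\<Sum>k\<le>m. (of_nat m + of_nat (m+1) gchoose k) * x^k * y^(m-k)) =
     (\<Sum>k\<le>m. (of_nat k + of_nat (m+1) - 1 gchoose k) * x^k * (x + y)^(m-k))"
      by (rule gbinomial_partial_sum_poly_xpos)
    moreover have "(\<Sum>k\<le>m. (of_nat m + of_nat (m+1) gchoose k) * x^k * y^(m-k)) = (\<Sum>k\<le>m. of_nat (2*m+1 choose k) * x^k * y^(m-k))"
    proof (intro sum.cong refl)
      fix k have "(of_nat m + of_nat (m+1) :: real) = of_nat (2*m+1)" by simp
      then show "(of_nat m + of_nat (m+1) gchoose k) * x^k * y^(m-k) = of_nat (2*m+1 choose k) * x^k * y^(m-k)"
        by (simp only: binomial_gbinomial)
    qed
    moreover have "(\<Sum>k\<le>m. (of_nat k + of_nat (m+1) - 1 gchoose k) * x^k * (x + y)^(m-k)) = (\<Sum>j<L. of_nat (L - 1 + j choose j) * x^j * (x+y)^(L-1-j))"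
    proof -
      have e: "{..<L} = {..m}" unfolding L by auto
      show ?thesis unfolding e
      proof (intro sum.cong refl)
        fix k have "(of_nat k + of_nat (m+1) - 1 :: real) = of_nat (L - 1 + k)" by (simp add: L)
        then show "(of_nat k + of_nat (m+1) - 1 gchoose k) * x^k * (x+y)^(m-k) = of_nat (L - 1 + k choose k) * x^k * (x+y)^(L-1-k)"
          by (simp only: binomial_gbinomial L) simp
      qed
    qed
    ultimately show "?thesis x y" by simp
  qed
  have "y^L * (\<Sum>k\<le>m. of_nat (2*m+1 choose k) * x^k * y^(m-k)) = (\<Sum>k\<le>m. of_nat (2*m+1 choose k) * x^k * y^(2*m+1-k))"
    unfolding sum_distrib_left
  proof (intro sum.cong refl)
    fix k assume k: "k \<in> {..m}"
    show "y^L * (of_nat (2*m+1 choose k) * x^k * y^(m-k)) = of_nat (2*m+1 choose k) * x^k * y^(2*m+1-k)"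
      by (rule l1) (use k L in auto)
  qed
  moreover have "x^L * (\<Sum>k\<le>m. of_nat (2*m+1 choose k) * y^k * x^(m-k)) = (\<Sum>k=m+1..2*m+1. of_nat (2*m+1 choose k) * x^k * y^(2*m+1-k))"
  proof -
    have "x^L * (\<Sum>k\<le>m. of_nat (2*m+1 choose k) * y^k * x^(m-k)) = (\<Sum>k\<le>m. of_nat (2*m+1 choose (2*m+1-k)) * x^(2*m+1-k) * y^k)"
      unfolding sum_distrib_left
    proof (intro sum.cong refl)
      fix k assume k: "k \<in> {..m}"
      have bs: "(2*m+1 choose k) = (2*m+1 choose (2*m+1-k))"
        using k by (intro binomial_symmetric) auto
      show "x^L * (of_nat (2*m+1 choose k) * y^k * x^(m-k)) = of_nat (2*m+1 choose (2*m+1-k)) * x^(2*m+1-k) * y^k"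
        by (rule l2) (use k L bs in auto)
    qed
    also have "\<dots> = (\<Sum>k=m+1..2*m+1. of_nat (2*m+1 choose k) * x^k * y^(2*m+1-k))"
    proof (rule sum.reindex_bij_witness[where i="\<lambda>k. 2*m+1-k" and j="\<lambda>k. 2*m+1-k"])
    qed auto
    finally show ?thesis .
  qed
  ultimately have "y^L * (\<Sum>j<L. of_nat (L - 1 + j choose j) * x^j * (x+y)^(L-1-j))
       + x^L * (\<Sum>j<L. of_nat (L - 1 + j choose j) * y^j * (x+y)^(L-1-j))
     = (\<Sum>k\<le>m. of_nat (2*m+1 choose k) * x^k * y^(2*m+1-k)) + (\<Sum>k=m+1..2*m+1. of_nat (2*m+1 choose k) * x^k * y^(2*m+1-k))"
    using key[of x y] key[of y x] by (simp add: add.commute)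
  also have "\<dots> = (\<Sum>k\<le>2*m+1. of_nat (2*m+1 choose k) * x^k * y^(2*m+1-k))"
  proof -
    have "{..2*m+1} = {..m} \<union> {m+1..2*m+1}" by auto
    then show ?thesis by (simp only:) (rule sum.union_disjoint[symmetric], auto)
  qed
  also have "\<dots> = (x+y)^(2*m+1)" by (simp only: binomial_ring)
  finally show ?thesis by (simp add: L)
qed


lemma pf_reindex:
  fixes L :: nat and x :: real
  shows "(\<Sum>j<L. of_nat (L - 1 + j choose j) / x^(L-j)) = (\<Sum>k<L. of_nat (2*L-2-k choose (L-1-k)) / x^(k+1))"
proof (rule sum.reindex_bij_witness[where i="\<lambda>k. L-1-k" and j="\<lambda>k. L-1-k"])
  fix a assume "a \<in> {..<L}"
  then have "2*L-2-(L-1-a) = L-1+a" "L-1-(L-1-a) = a" "L-1-a+1 = L - a" by auto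
  then show "of_nat (2*L-2-(L-1-a) choose (L-1-(L-1-a))) / x^(L-1-a+1) = of_nat (L - 1 + a choose a) / x^(L-a)"
    by (simp only:)
qed auto

lemma pf_div:
  fixes L :: nat and x :: real
  assumes "x \<noteq> 0"
  shows "(\<Sum>j<L. of_nat (L - 1 + j choose j) * x^j) / x^L = (\<Sum>k<L. of_nat (2*L-2-k choose (L-1-k)) / x^(k+1))"
proof -
  have "(\<Sum>j<L. of_nat (L - 1 + j choose j) * x^j) / x^L = (\<Sum>j<L. of_nat (L - 1 + j choose j) / x^(L-j))"
    unfolding sum_divide_distrib
  proof (intro sum.cong refl)
    fix j assume "j \<in> {..<L}"
    then have "x^L = x^j * x^(L-j)" by (simp add: power_add[symmetric])
    then show "of_nat (L - 1 + j choose j) * x^j / x^L = of_nat (L - 1 + j choose j) / x^(L-j)"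
      using assms by simp
  qed
  then show ?thesis using pf_reindex by simp
qed

lemma pf_XY:
  fixes X Y :: real and L :: nat
  assumes "1 \<le> L" "X \<noteq> 0" "Y \<noteq> 0" "X + Y = 1"
  shows "1 / (X*Y)^L = (\<Sum>k<L. of_nat (2*L-2-k choose (L-1-k)) * (1/X^(k+1) + 1/Y^(k+1)))"
proof -
  define S where "S = (\<lambda>x::real. \<Sum>j<L. of_nat (L - 1 + j choose j) * x^j)"
  have 1: "Y^L * S X + X^L * S Y = 1"
    using poly_id[OF assms(1), of Y X] assms(4) unfolding S_def by (simp add: add.commute)
  have "1 / (X*Y)^L = (Y^L * S X + X^L * S Y) / (X^L * Y^L)" using 1 by (simp add: power_mult_distrib)
  also have "\<dots> = S X / X^L + S Y / Y^L" using assms by (simp add: add_divide_distrib)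
  also have "\<dots> = (\<Sum>k<L. of_nat (2*L-2-k choose (L-1-k)) * (1/X^(k+1) + 1/Y^(k+1)))"
    unfolding S_def pf_div[OF assms(2)] pf_div[OF assms(3)] by (simp add: sum.distrib[symmetric] ring_distribs)
  finally show ?thesis .
qed


lemma binom_fact_aux:
  assumes "k \<le> L - 1"
  shows "(of_nat (2*L-2-k choose (L-1-k)) :: real) = fact (2*(L-1)-k) / (fact (L-1-k) * fact (L-1))"
proof -
  have "2*L-2-k = 2*(L-1)-k" by simp
  moreover have "2*(L-1)-k - (L-1-k) = L-1" using assms by simp
  moreover have "L-1-k \<le> 2*(L-1)-k" by simp
  ultimately show ?thesis using binomial_fact[of "L-1-k" "2*(L-1)-k", where 'a=real] by (simp only:)
qed

lemma coef1_eq: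
  assumes "k \<le> L - 1" "d1 \<noteq> 0"
  shows "coef L d1 d2 1 k * fact k = of_nat (2*L-2-k choose (L-1-k)) * (d1/(d1-d2))^L * (d2/(d2-d1))^(L-1-k) / d1^(k+1)"
  unfolding coef_def binom_fact_aux[OF assms(1)] using assms by (simp add: field_simps)

lemma coef2_eq:
  assumes "k \<le> L - 1" "d2 \<noteq> 0"
  shows "coef L d1 d2 2 k * fact k = of_nat (2*L-2-k choose (L-1-k)) * (d2/(d2-d1))^L * (d1/(d1-d2))^(L-1-k) / d2^(k+1)"
  unfolding coef_def binom_fact_aux[OF assms(1)] using assms by (simp add: field_simps)


lemma XY_aux: fixes d1 d2 s :: real assumes "d1 \<noteq> d2"
  shows "d2/(d2-d1) * (1 + s*d1) + d1/(d1-d2) * (1 + s*d2) = 1"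
proof -
  have "d1 - d2 \<noteq> 0" "d2 - d1 \<noteq> 0" using assms by auto
  then have "d1/(d1-d2) = - d1/(d2-d1)" by (simp add: field_simps)
  then show ?thesis using \<open>d2 - d1 \<noteq> 0\<close> by (simp add: divide_simps) (simp add: algebra_simps)
qed
lemma pow_shift: fixes d s :: real assumes "d > 0" shows "(s + 1/d)^(k+1) = (1+s*d)^(k+1)/d^(k+1)"
proof -
  have "s + 1/d = (1+s*d)/d" using assms by (simp add: field_simps)
  then show ?thesis by (simp add: power_divide)
qed


definition Rm :: "nat \<Rightarrow> real \<Rightarrow> real \<Rightarrow> nat \<Rightarrow> real \<Rightarrow> real" where
  "Rm L d1 d2 m s = (\<Sum>j\<in>{1,2}. \<Sum>k=0..L-1. coef L d1 d2 j k * fact (m+k) / (s + 1/delta d1 d2 j)^(m+k+1))"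

lemma term_aux:
  fixes A B u c d :: real
  assumes "B \<noteq> 0" "u \<noteq> 0" "d \<noteq> 0" "k \<le> L - 1" "1 \<le> L"
  shows "c * A^L * B^(L-1-k) / d^(k+1) / (u^(k+1)/d^(k+1)) = (A*B)^L * (c / (B * u)^(k+1))"
proof -
  have "L = (L-1-k) + (k+1)" using assms by simp
  then have p: "B^L = B^(L-1-k) * B^(k+1)" by (metis power_add)
  have "(A*B)^L * (c / (B * u)^(k+1)) = c * A^L * B^(L-1-k) * (B^(k+1) / (B^(k+1) * u^(k+1)))"
    unfolding p power_mult_distrib by simp
  also have "\<dots> = c * A^L * B^(L-1-k) / u^(k+1)" using assms by simp
  also have "\<dots> = c * A^L * B^(L-1-k) / d^(k+1) / (u^(k+1)/d^(k+1))" using assms by simp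
  finally show ?thesis by simp
qed

lemma R0:
  assumes L: "1 \<le> L" and d: "d1 > 0" "d2 > 0" "d1 \<noteq> d2" and s: "s \<ge> 0"
  shows "Rm L d1 d2 0 s = 1 / ((1 + s*d1)^L * (1 + s*d2)^L)"
proof -
  define u where "u = 1 + s*d1"
  define v where "v = 1 + s*d2"
  define A where "A = d1/(d1-d2)"
  define B where "B = d2/(d2-d1)"
  have u: "u > 0" and v: "v > 0" using s d by (auto simp: u_def v_def intro: add_pos_nonneg)
  have A: "A \<noteq> 0" and B: "B \<noteq> 0" using d by (auto simp: A_def B_def)
  have XY: "B * u + A * v = 1" unfolding A_def B_def u_def v_def by (rule XY_aux[OF d(3)])
  define C where "C = (\<lambda>k. of_nat (2*L-2-k choose (L-1-k)) :: real)"
  have sum_eq: "{0..L-1} = {..<L}" using L by auto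
  have t1: "coef L d1 d2 1 k * fact (0+k) / (s + 1/delta d1 d2 1)^(0+k+1) = (A*B)^L * (C k / (B * u)^(k+1))"
    if "k \<in> {..<L}" for k
  proof -
    have k: "k \<le> L - 1" using that by auto
    have "coef L d1 d2 1 k * fact (0+k) / (s + 1/delta d1 d2 1)^(0+k+1) = C k * A^L * B^(L-1-k) / d1^(k+1) / (u^(k+1)/d1^(k+1))"
    proof -
      have "(s + 1/delta d1 d2 1)^(0+k+1) = u^(k+1)/d1^(k+1)" using pow_shift[OF d(1)] by (simp add: delta_def u_def)
      then show ?thesis using coef1_eq[OF k, of d1 d2] unfolding C_def A_def B_def by simp
    qed
    also have "\<dots> = (A*B)^L * (C k / (B * u)^(k+1))" using term_aux[OF B, where u=u and d=d1 and c="C k" and A=A] k L u d by simp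
    finally show ?thesis .
  qed
  have t2: "coef L d1 d2 2 k * fact (0+k) / (s + 1/delta d1 d2 2)^(0+k+1) = (A*B)^L * (C k / (A * v)^(k+1))"
    if "k \<in> {..<L}" for k
  proof -
    have k: "k \<le> L - 1" using that by auto
    have "coef L d1 d2 2 k * fact (0+k) / (s + 1/delta d1 d2 2)^(0+k+1) = C k * B^L * A^(L-1-k) / d2^(k+1) / (v^(k+1)/d2^(k+1))"
    proof -
      have "(s + 1/delta d1 d2 2)^(0+k+1) = v^(k+1)/d2^(k+1)" using pow_shift[OF d(2)] by (simp add: delta_def v_def)
      then show ?thesis using coef2_eq[OF k, of d2 d1] unfolding C_def A_def B_def by simp
    qed
    also have "\<dots> = (B*A)^L * (C k / (A * v)^(k+1))" using term_aux[OF A, where u=v and d=d2 and c="C k" and A=B] k L v d by simp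
    finally show ?thesis by (simp add: mult.commute)
  qed
  have "Rm L d1 d2 0 s = (\<Sum>k<L. coef L d1 d2 1 k * fact (0+k) / (s + 1/delta d1 d2 1)^(0+k+1))
     + (\<Sum>k<L. coef L d1 d2 2 k * fact (0+k) / (s + 1/delta d1 d2 2)^(0+k+1))"
    unfolding Rm_def sum_eq by simp
  also have "\<dots> = (\<Sum>k<L. (A*B)^L * (C k / (B * u)^(k+1))) + (\<Sum>k<L. (A*B)^L * (C k / (A * v)^(k+1)))"
    using t1 t2 by simp
  also have "\<dots> = (A*B)^L * (\<Sum>k<L. C k * (1/(B * u)^(k+1) + 1/(A * v)^(k+1)))"
    by (simp add: sum.distrib[symmetric] sum_distrib_left ring_distribs)
  also have "\<dots> = (A*B)^L * (1 / ((B * u)*(A * v))^L)"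
    using pf_XY[OF L, of "B * u" "A * v"] XY u v A B unfolding C_def by simp
  also have "\<dots> = 1 / (u^L * v^L)" using A B u v by (simp add: power_mult_distrib)
  finally show ?thesis unfolding u_def v_def .
qed


lemma leibniz_comb:
  fixes A B :: "nat \<Rightarrow> real"
  shows "(\<Sum>r\<le>Suc m. of_nat (Suc m choose r) * A r * B (Suc m - r))
       = (\<Sum>r\<le>m. of_nat (m choose r) * A (Suc r) * B (m - r)) + (\<Sum>r\<le>m. of_nat (m choose r) * A r * B (Suc m - r))"
proof -
  define g where "g r = A r * B (Suc m - r)" for r
  have h1: "(\<Sum>r\<le>Suc m. of_nat (Suc m choose r) * A r * B (Suc m - r)) = g 0 + (\<Sum>r\<le>m. of_nat (Suc m choose Suc r) * g (Suc r))"
    unfolding g_def by (subst sum.atMost_Suc_shift) (simp add: mult.assoc)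
  have h2: "(\<Sum>r\<le>m. of_nat (Suc m choose Suc r) * g (Suc r)) = (\<Sum>r\<le>m. of_nat (m choose r) * g (Suc r)) + (\<Sum>r\<le>m. of_nat (m choose Suc r) * g (Suc r))"
    by (simp add: sum.distrib ring_distribs)
  have h3: "g 0 + (\<Sum>r\<le>m. of_nat (m choose Suc r) * g (Suc r)) = (\<Sum>r\<le>Suc m. of_nat (m choose r) * g r)"
    by (subst sum.atMost_Suc_shift) simp
  have h4: "(\<Sum>r\<le>Suc m. of_nat (m choose r) * g r) = (\<Sum>r\<le>m. of_nat (m choose r) * A r * B (Suc m - r))"
    unfolding g_def by (simp add: mult.assoc)
  have h5: "(\<Sum>r\<le>m. of_nat (m choose r) * g (Suc r)) = (\<Sum>r\<le>m. of_nat (m choose r) * A (Suc r) * B (m - r))"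
    unfolding g_def by (simp add: mult.assoc)
  show ?thesis using h1 h2 h3 h4 h5 by linarith
qed

lemma leibniz_deriv:
  fixes A B :: "nat \<Rightarrow> real \<Rightarrow> real"
  assumes dA: "\<And>r. (A r has_real_derivative -(A (Suc r) s)) (at s)"
    and dB: "\<And>r. (B r has_real_derivative -(B (Suc r) s)) (at s)"
  shows "((\<lambda>s. \<Sum>r\<le>m. of_nat (m choose r) * A r s * B (m-r) s) has_real_derivative
          -(\<Sum>r\<le>Suc m. of_nat (Suc m choose r) * A r s * B (Suc m - r) s)) (at s)"
proof -
  have dterm: "((\<lambda>s. c * A r s * B q s) has_real_derivative -(c * A (Suc r) s * B q s + c * A r s * B (Suc q) s)) (at s)"
    for c r q
    by (rule DERIV_cong[OF DERIV_mult[OF DERIV_cmult[OF dA] dB]]) (simp add: algebra_simps)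
  have "((\<lambda>s. \<Sum>r\<le>m. of_nat (m choose r) * A r s * B (m-r) s) has_real_derivative
          (\<Sum>r\<le>m. -(of_nat (m choose r) * A (Suc r) s * B (m-r) s + of_nat (m choose r) * A r s * B (Suc (m-r)) s))) (at s)"
    by (intro DERIV_sum dterm)
  moreover have "(\<Sum>r\<le>m. -(of_nat (m choose r) * A (Suc r) s * B (m-r) s + of_nat (m choose r) * A r s * B (Suc (m-r)) s))
      = -(\<Sum>r\<le>Suc m. of_nat (Suc m choose r) * A r s * B (Suc m - r) s)"
  proof -
    have "\<And>r. r \<in> {..m} \<Longrightarrow> Suc (m - r) = Suc m - r" by auto
    then have "(\<Sum>r\<le>m. -(of_nat (m choose r) * A (Suc r) s * B (m-r) s + of_nat (m choose r) * A r s * B (Suc (m-r)) s))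
      = -((\<Sum>r\<le>m. of_nat (m choose r) * A (Suc r) s * B (m - r) s) + (\<Sum>r\<le>m. of_nat (m choose r) * A r s * B (Suc m - r) s))"
      by (simp add: sum.distrib[symmetric] sum_negf[symmetric])
    also have "\<dots> = -(\<Sum>r\<le>Suc m. of_nat (Suc m choose r) * A r s * B (Suc m - r) s)"
      using leibniz_comb[where A="\<lambda>r. A r s" and B="\<lambda>r. B r s" and m=m] by simp
    finally show ?thesis .
  qed
  ultimately show ?thesis by simp
qed


lemma alg_pow_aux:
  fixes w K b :: real assumes "w \<noteq> 0"
  shows "(0 * w^n - K * (of_nat n * (b * w^(n - Suc 0)))) / (w^n * w^n) = -(K * of_nat n * b / w^(Suc n))"
proof (cases n)
  case 0 then show ?thesis by simp
next
  case (Suc k)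
  have e: "w^n * w^n = w^k * w^(Suc n)" unfolding Suc by (simp add: power_add[symmetric])
  have "(0 * w^n - K * (of_nat n * (b * w^(n - Suc 0)))) / (w^n * w^n) = -((K * of_nat n * b) * w^k / (w^k * w^(Suc n)))"
    unfolding e Suc by (simp add: algebra_simps minus_divide_left)
  also have "\<dots> = -(K * of_nat n * b / w^(Suc n))" using assms by simp
  finally show ?thesis .
qed

lemma deriv_pow_inv:
  fixes a b K s :: real
  assumes "a + s*b \<noteq> 0"
  shows "((\<lambda>s. K / (a + s*b)^n) has_real_derivative -(K * of_nat n * b / (a+s*b)^(Suc n))) (at s)"
proof -
  have d1: "((\<lambda>s. a + s*b) has_real_derivative b) (at s)"
    by (rule DERIV_cong[OF DERIV_add[OF DERIV_const DERIV_cmult_right[OF DERIV_ident]]]) simp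
  have "((\<lambda>s. K / (a + s*b)^n) has_real_derivative (0 * (a+s*b)^n - K * (of_nat n * (b * (a+s*b)^(n - Suc 0)))) / ((a+s*b)^n * (a+s*b)^n)) (at s)"
    using assms by (intro DERIV_divide DERIV_const DERIV_power d1) auto
  then show ?thesis using alg_pow_aux[OF assms] by simp
qed


definition Aa :: "real \<Rightarrow> nat \<Rightarrow> nat \<Rightarrow> real \<Rightarrow> real" where
  "Aa d L r s = fact (L - 1 + r) / fact (L - 1) * d^r / (1 + s*d)^(L+r)"

definition Pm :: "nat \<Rightarrow> real \<Rightarrow> real \<Rightarrow> nat \<Rightarrow> real \<Rightarrow> real" where
  "Pm L d1 d2 m s = (\<Sum>r\<le>m. of_nat (m choose r) * Aa d1 L r s * Aa d2 L (m-r) s)"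

lemma aux_ac: "(a::real) * F / G * (d * e) / P = F / G * e * a * d / P"
  by (simp add: ac_simps)

lemma Aa_deriv:
  assumes "1 + s*d \<noteq> 0" "1 \<le> L"
  shows "((\<lambda>s. Aa d L r s) has_real_derivative -(Aa d L (Suc r) s)) (at s)"
proof -
  have "((\<lambda>s. Aa d L r s) has_real_derivative -((fact (L - 1 + r) / fact (L - 1) * d^r) * of_nat (L+r) * d / (1+s*d)^(Suc (L+r)))) (at s)"
    unfolding Aa_def by (rule deriv_pow_inv) (use assms in simp)
  moreover have "(fact (L - 1 + r) / fact (L - 1) * d^r) * of_nat (L+r) * d / (1+s*d)^(Suc (L+r)) = Aa d L (Suc r) s"
  proof -
    have "L - 1 + Suc r = Suc (L - 1 + r)" "Suc (L - 1 + r) = L + r" "L + Suc r = Suc (L+r)" using assms by auto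
    then have "fact (L - 1 + Suc r) = (of_nat (L+r) * fact (L - 1 + r) :: real)" by (metis fact_Suc)
    moreover have "(1+s*d)^(L+Suc r) = (1+s*d)^(Suc (L+r))" using \<open>L + Suc r = Suc (L+r)\<close> by simp
    ultimately have "Aa d L (Suc r) s = of_nat (L+r) * fact (L - 1 + r) / fact (L - 1) * (d * d^r) / (1+s*d)^(Suc (L+r))"
      unfolding Aa_def by (simp only: power_Suc)
    then show ?thesis by (simp only: aux_ac)
  qed
  ultimately show ?thesis by simp
qed

lemma Rm_deriv:
  assumes "s > 0" "d1 > 0" "d2 > 0"
  shows "((\<lambda>s. Rm L d1 d2 m s) has_real_derivative -(Rm L d1 d2 (Suc m) s)) (at s)"
proof -
  have pos: "s + 1/delta d1 d2 j \<noteq> 0" for j using assms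
    by (auto simp: delta_def) (smt (verit) divide_pos_pos)+
  have dterm: "((\<lambda>s. coef L d1 d2 j k * fact (m+k) / (s + 1/delta d1 d2 j)^(m+k+1)) has_real_derivative
      -(coef L d1 d2 j k * fact (Suc m+k) / (s + 1/delta d1 d2 j)^(Suc m+k+1))) (at s)" for j k
  proof -
    have "((\<lambda>s. coef L d1 d2 j k * fact (m+k) / (1/delta d1 d2 j + s*1)^(m+k+1)) has_real_derivative
      -(coef L d1 d2 j k * fact (m+k) * of_nat (m+k+1) * 1 / (1/delta d1 d2 j + s*1)^(Suc (m+k+1)))) (at s)"
      by (rule deriv_pow_inv) (use pos[of j] in \<open>simp add: add.commute\<close>)
    moreover have "fact (Suc m + k) = (fact (m+k) * of_nat (m+k+1) :: real)"
      by (metis Suc_eq_plus1 add_Suc fact_Suc mult.commute)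
    ultimately show ?thesis by (simp add: ac_simps)
  qed
  show ?thesis unfolding Rm_def
    by (rule DERIV_cong[OF DERIV_sum[OF DERIV_sum[OF dterm]]]) (simp add: sum_negf)
qed

lemma Pm_Rm:
  assumes L: "1 \<le> L" and d: "d1 > 0" "d2 > 0" "d1 \<noteq> d2"
  shows "s > 0 \<Longrightarrow> Pm L d1 d2 m s = Rm L d1 d2 m s"
proof (induction m arbitrary: s)
  case 0
  then show ?case using R0[OF L d, of s] unfolding Pm_def Aa_def by (simp add: power_mult_distrib)
next
  case (Suc m)
  have dA: "((\<lambda>s. Aa d L r s) has_real_derivative -(Aa d L (Suc r) s)) (at s)" if "d > 0" for d r
    using Aa_deriv[OF _ L] that Suc.prems by (smt (verit) mult_pos_pos)
  have dP: "((\<lambda>s. Pm L d1 d2 m s) has_real_derivative -(Pm L d1 d2 (Suc m) s)) (at s)"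
    unfolding Pm_def by (rule leibniz_deriv) (use dA d in auto)
  have "((\<lambda>s. Rm L d1 d2 m s) has_real_derivative -(Pm L d1 d2 (Suc m) s)) (at s)"
  proof (rule has_field_derivative_transform_within_open[OF dP, where S="{0<..}"])
    show "s \<in> {0<..}" using Suc.prems by simp
  qed (use Suc.IH in auto)
  moreover have "((\<lambda>s. Rm L d1 d2 m s) has_real_derivative -(Rm L d1 d2 (Suc m) s)) (at s)"
    by (rule Rm_deriv) (use Suc.prems d in auto)
  ultimately show ?case using DERIV_unique by fastforce
qed


lemma gamma_density_alt: "gamma_density n y = (if y < 0 then 0 else y^(n-1) * exp (-y) / fact (n-1))"
  unfolding gamma_density_def erlang_density_def by (cases "n = 0") auto

lemma gamma_density_nonneg[simp]: "0 \<le> gamma_density n y"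
  unfolding gamma_density_def by simp

lemma gamma_density_measurable[measurable]: "gamma_density n \<in> borel_measurable borel"
  unfolding gamma_density_def by simp

lemma G1:
  assumes "c \<ge> 0" "1 \<le> L"
  shows "(\<integral>\<^sup>+ y. ennreal (gamma_density L y * (y^r * exp (-c*y))) \<partial>lborel)
       = ennreal (fact (L-1+r) / (fact (L-1) * (1+c)^(L+r)))"
proof -
  have pw: "gamma_density L y * (y^r * exp (-c*y)) = (1/(1+c)^L) * (erlang_density (L-1) (1+c) y * y^r)" for y
  proof (cases "y < 0")
    case True then show ?thesis by (simp add: gamma_density_alt erlang_density_def)
  next
    case False
    have "exp (-y) * exp (-c*y) = exp (-(1+c)*y)" by (simp add: exp_add[symmetric] algebra_simps)
    moreover have "Suc (L-1) = L" using assms by simp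
    ultimately show ?thesis using False assms
      by (simp add: gamma_density_alt erlang_density_def field_simps)
  qed
  have "(\<integral>\<^sup>+ y. ennreal (gamma_density L y * (y^r * exp (-c*y))) \<partial>lborel)
      = (\<integral>\<^sup>+ y. ennreal (1/(1+c)^L) * ennreal (erlang_density (L-1) (1+c) y * y^r) \<partial>lborel)"
    unfolding pw using assms by (intro nn_integral_cong ennreal_mult') simp
  also have "\<dots> = ennreal (1/(1+c)^L) * (\<integral>\<^sup>+ y. ennreal (erlang_density (L-1) (1+c) y * y^r) \<partial>lborel)"
    by (rule nn_integral_cmult) measurable
  also have "\<dots> = ennreal (1/(1+c)^L) * ennreal (fact (L-1+r) / (fact (L-1) * (1+c)^r))"
    using nn_integral_erlang_ith_moment[of "1+c" "L-1" r] assms by simp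
  also have "\<dots> = ennreal (fact (L-1+r) / (fact (L-1) * (1+c)^(L+r)))"
    using assms by (simp add: ennreal_mult[symmetric] power_add field_simps)
  finally show ?thesis .
qed


lemma gterm_nonneg: "0 \<le> gamma_density L y * (y^r * exp (-c*y))"
  by (cases "y < 0") (auto simp: gamma_density_alt)

lemma G1': 
  assumes "c \<ge> 0" "1 \<le> L" "d > 0"
  shows "ennreal (d^r) * (\<integral>\<^sup>+ y. ennreal (gamma_density L y * (y^r * exp (-c*y))) \<partial>lborel) = ennreal (Aa d L r (c/d))"
proof -
  have "c/d*d = c" using assms by simp
  then show ?thesis unfolding G1[OF assms(1,2)] Aa_def using assms
    by (simp add: ennreal_mult[symmetric] field_simps)
qed

lemma J_pw:
  fixes d1 d2 s y1 y2 :: real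
  shows "gamma_density L y2 * gamma_density L y1 * ((d1*y1 + d2*y2)^m * exp (-s*(d1*y1 + d2*y2)))
    = (\<Sum>r\<le>m. (of_nat (m choose r) * d1^r * d2^(m-r)) * (gamma_density L y2 * (y2^(m-r) * exp (-(s*d2)*y2)))
             * (gamma_density L y1 * (y1^r * exp (-(s*d1)*y1))))"
proof -
  have "exp (-s*(d1*y1 + d2*y2)) = exp (-(s*d1)*y1) * exp (-(s*d2)*y2)"
    by (simp add: exp_add[symmetric] algebra_simps)
  moreover have "(d1*y1 + d2*y2)^m = (\<Sum>r\<le>m. of_nat (m choose r) * (d1*y1)^r * (d2*y2)^(m-r))"
    by (rule binomial_ring)
  ultimately show ?thesis
    by (simp add: sum_distrib_left sum_distrib_right power_mult_distrib ac_simps)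
qed

lemma J_lemma:
  assumes "s \<ge> 0" "d1 > 0" "d2 > 0" "1 \<le> L"
  shows "(\<integral>\<^sup>+ y2. \<integral>\<^sup>+ y1. ennreal (gamma_density L y2 * gamma_density L y1 * ((d1*y1 + d2*y2)^m * exp (-s*(d1*y1 + d2*y2)))) \<partial>lborel \<partial>lborel)
     = ennreal (Pm L d1 d2 m s)"
proof -
  define K where "K r = of_nat (m choose r) * d1^r * d2^(m-r)" for r
  define a where "a r y = gamma_density L y * (y^r * exp (-(s*d1)*y))" for r y
  define b where "b r y = gamma_density L y * (y^r * exp (-(s*d2)*y))" for r y
  have am[measurable]: "a r \<in> borel_measurable borel" for r unfolding a_def by measurable
  have bm[measurable]: "b r \<in> borel_measurable borel" for r unfolding b_def by measurable
  have K: "0 \<le> K r" for r using assms unfolding K_def by simp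
  have a: "0 \<le> a r y" for r y unfolding a_def by (rule gterm_nonneg)
  have b: "0 \<le> b r y" for r y unfolding b_def by (rule gterm_nonneg)
  have "(\<integral>\<^sup>+ y2. \<integral>\<^sup>+ y1. ennreal (gamma_density L y2 * gamma_density L y1 * ((d1*y1 + d2*y2)^m * exp (-s*(d1*y1 + d2*y2)))) \<partial>lborel \<partial>lborel)
     = (\<integral>\<^sup>+ y2. \<integral>\<^sup>+ y1. (\<Sum>r\<le>m. ennreal (K r * b (m-r) y2) * ennreal (a r y1)) \<partial>lborel \<partial>lborel)"
    unfolding J_pw K_def[symmetric] a_def[symmetric] b_def[symmetric]
    by (intro nn_integral_cong, subst sum_ennreal[symmetric])
       (auto intro!: sum.cong simp: a b K ennreal_mult'')
  also have "\<dots> = (\<integral>\<^sup>+ y2. (\<Sum>r\<le>m. ennreal (K r * b (m-r) y2) * (\<integral>\<^sup>+ y1. ennreal (a r y1) \<partial>lborel)) \<partial>lborel)"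
    by (intro nn_integral_cong) (simp add: nn_integral_sum nn_integral_cmult a_def)
  also have "\<dots> = (\<Sum>r\<le>m. ennreal (K r) * (\<integral>\<^sup>+ y2. ennreal (b (m-r) y2) \<partial>lborel) * (\<integral>\<^sup>+ y1. ennreal (a r y1) \<partial>lborel))"
  proof -
    have "(\<integral>\<^sup>+ y2. (\<Sum>r\<le>m. ennreal (K r * b (m-r) y2) * (\<integral>\<^sup>+ y1. ennreal (a r y1) \<partial>lborel)) \<partial>lborel)
       = (\<Sum>r\<le>m. \<integral>\<^sup>+ y2. ennreal (K r * b (m-r) y2) * (\<integral>\<^sup>+ y1. ennreal (a r y1) \<partial>lborel) \<partial>lborel)"
      by (rule nn_integral_sum) measurable
    also have "\<dots> = (\<Sum>r\<le>m. ennreal (K r) * (\<integral>\<^sup>+ y2. ennreal (b (m-r) y2) \<partial>lborel) * (\<integral>\<^sup>+ y1. ennreal (a r y1) \<partial>lborel))"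
    proof (intro sum.cong refl)
      fix r
      have "(\<integral>\<^sup>+ y2. ennreal (K r * b (m-r) y2) * (\<integral>\<^sup>+ y1. ennreal (a r y1) \<partial>lborel) \<partial>lborel)
        = (\<integral>\<^sup>+ y2. ennreal (K r) * ennreal (b (m-r) y2) * (\<integral>\<^sup>+ y1. ennreal (a r y1) \<partial>lborel) \<partial>lborel)"
        by (simp add: ennreal_mult' K)
      also have "\<dots> = (\<integral>\<^sup>+ y2. ennreal (K r) * ennreal (b (m-r) y2) \<partial>lborel) * (\<integral>\<^sup>+ y1. ennreal (a r y1) \<partial>lborel)"
        by (rule nn_integral_multc) measurable
      also have "(\<integral>\<^sup>+ y2. ennreal (K r) * ennreal (b (m-r) y2) \<partial>lborel) = ennreal (K r) * (\<integral>\<^sup>+ y2. ennreal (b (m-r) y2) \<partial>lborel)"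
        by (rule nn_integral_cmult) measurable
      finally show "(\<integral>\<^sup>+ y2. ennreal (K r * b (m-r) y2) * (\<integral>\<^sup>+ y1. ennreal (a r y1) \<partial>lborel) \<partial>lborel)
         = ennreal (K r) * (\<integral>\<^sup>+ y2. ennreal (b (m-r) y2) \<partial>lborel) * (\<integral>\<^sup>+ y1. ennreal (a r y1) \<partial>lborel)" .
    qed
    finally show ?thesis .
  qed
  also have "\<dots> = (\<Sum>r\<le>m. ennreal (of_nat (m choose r)) * (ennreal (d2^(m-r)) * (\<integral>\<^sup>+ y2. ennreal (b (m-r) y2) \<partial>lborel))
          * (ennreal (d1^r) * (\<integral>\<^sup>+ y1. ennreal (a r y1) \<partial>lborel)))"
  proof (intro sum.cong refl)
    fix r
    have "ennreal (K r) = ennreal (of_nat (m choose r)) * ennreal (d1^r) * ennreal (d2^(m-r))"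
      unfolding K_def using assms by (simp add: ennreal_mult)
    then show "ennreal (K r) * (\<integral>\<^sup>+ y2. ennreal (b (m-r) y2) \<partial>lborel) * (\<integral>\<^sup>+ y1. ennreal (a r y1) \<partial>lborel) =
      ennreal (of_nat (m choose r)) * (ennreal (d2^(m-r)) * (\<integral>\<^sup>+ y2. ennreal (b (m-r) y2) \<partial>lborel))
          * (ennreal (d1^r) * (\<integral>\<^sup>+ y1. ennreal (a r y1) \<partial>lborel))"
      by (simp add: ac_simps)
  qed
  also have "\<dots> = (\<Sum>r\<le>m. ennreal (of_nat (m choose r)) * ennreal (Aa d2 L (m-r) s) * ennreal (Aa d1 L r s))"
  proof (intro sum.cong refl)
    fix r
    have "ennreal (d2^(m-r)) * (\<integral>\<^sup>+ y2. ennreal (b (m-r) y2) \<partial>lborel) = ennreal (Aa d2 L (m-r) (s*d2/d2))"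
      unfolding b_def by (rule G1') (use assms in auto)
    moreover have "ennreal (d1^r) * (\<integral>\<^sup>+ y1. ennreal (a r y1) \<partial>lborel) = ennreal (Aa d1 L r (s*d1/d1))"
      unfolding a_def by (rule G1') (use assms in auto)
    ultimately show "ennreal (of_nat (m choose r)) * (ennreal (d2^(m-r)) * (\<integral>\<^sup>+ y2. ennreal (b (m-r) y2) \<partial>lborel))
          * (ennreal (d1^r) * (\<integral>\<^sup>+ y1. ennreal (a r y1) \<partial>lborel)) = ennreal (of_nat (m choose r)) * ennreal (Aa d2 L (m-r) s) * ennreal (Aa d1 L r s)"
      using assms by simp
  qed
  also have "\<dots> = ennreal (Pm L d1 d2 m s)"
  proof -
    have nn: "0 \<le> Aa d L r s" if "d > 0" for d r using assms that unfolding Aa_def by simp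
    have "(\<Sum>r\<le>m. ennreal (of_nat (m choose r)) * ennreal (Aa d2 L (m-r) s) * ennreal (Aa d1 L r s))
       = (\<Sum>r\<le>m. ennreal (of_nat (m choose r) * Aa d1 L r s * Aa d2 L (m-r) s))"
      by (intro sum.cong refl) (simp add: nn assms ennreal_mult[symmetric] ac_simps)
    also have "\<dots> = ennreal (Pm L d1 d2 m s)" unfolding Pm_def
      by (rule sum_ennreal) (simp add: nn assms)
    finally show ?thesis .
  qed
  finally show ?thesis .
qed


definition tailQ :: "nat \<Rightarrow> real \<Rightarrow> real" where
  "tailQ n t = (\<Sum>i<n. t^i * exp (-t) / fact i)"

lemma gamma_total: "(\<integral>\<^sup>+ z. ennreal (gamma_density n z) \<partial>lborel) = 1"
  using nn_integral_erlang_ith_moment[of 1 "n-1" 0] unfolding gamma_density_def by simp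

lemma gamma_tail:
  assumes "1 \<le> n" "t \<ge> 0"
  shows "(\<integral>\<^sup>+ z. ennreal (gamma_density n z) * indicator {t<..} z \<partial>lborel) = ennreal (tailQ n t)"
proof -
  have cdf: "(\<integral>\<^sup>+ z. ennreal (gamma_density n z) * indicator {..t} z \<partial>lborel) = ennreal (erlang_CDF (n-1) 1 t)"
    unfolding gamma_density_def by (rule nn_integral_erlang_density) simp
  have "(\<integral>\<^sup>+ z. ennreal (gamma_density n z) * indicator {..t} z \<partial>lborel) + (\<integral>\<^sup>+ z. ennreal (gamma_density n z) * indicator {t<..} z \<partial>lborel)
      = (\<integral>\<^sup>+ z. ennreal (gamma_density n z) * indicator {..t} z + ennreal (gamma_density n z) * indicator {t<..} z \<partial>lborel)"
    by (rule nn_integral_add[symmetric]) measurable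
  also have "\<dots> = (\<integral>\<^sup>+ z. ennreal (gamma_density n z) \<partial>lborel)"
    by (intro nn_integral_cong) (auto split: split_indicator)
  finally have e: "ennreal (erlang_CDF (n-1) 1 t) + (\<integral>\<^sup>+ z. ennreal (gamma_density n z) * indicator {t<..} z \<partial>lborel) = 1"
    using cdf gamma_total by simp
  have nn: "0 \<le> erlang_CDF (n-1) 1 t" by simp
  have "(\<integral>\<^sup>+ z. ennreal (gamma_density n z) * indicator {t<..} z \<partial>lborel)
     = ennreal (erlang_CDF (n-1) 1 t) + (\<integral>\<^sup>+ z. ennreal (gamma_density n z) * indicator {t<..} z \<partial>lborel) - ennreal (erlang_CDF (n-1) 1 t)"
    by (rule ennreal_add_diff_cancel_left[symmetric]) simp
  also have "\<dots> = ennreal 1 - ennreal (erlang_CDF (n-1) 1 t)" unfolding e by simp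
  also have "\<dots> = ennreal (1 - erlang_CDF (n-1) 1 t)" by (rule ennreal_minus[OF nn])
  also have "1 - erlang_CDF (n-1) 1 t = tailQ n t"
  proof -
    have "{..n-1} = {..<n}" using assms by auto
    then show ?thesis using assms unfolding erlang_CDF_def tailQ_def by (simp add: mult.commute)
  qed
  finally show ?thesis .
qed


lemma ln_integral:
  assumes "b \<ge> 0"
  shows "ennreal (ln (1+b)) = (\<integral>\<^sup>+ x. ennreal (indicator {0..} x / (1+x) * (if x < b then 1 else 0)) \<partial>lborel)"
proof -
  have "(\<integral>\<^sup>+ x. ennreal (1/(1+x)) * indicator {0..b} x \<partial>lborel) = ennreal (ln (1+b) - ln (1+0))"
  proof (rule nn_integral_FTC_Icc)
    fix x :: real assume x: "x \<in> {0..b}"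
    show "((\<lambda>x. ln (1+x)) has_real_derivative 1/(1+x)) (at x)"
      using x by (auto intro!: derivative_eq_intros)
    show "0 \<le> 1/(1+x)" using x by simp
  qed (use assms in auto)
  also have "ln (1+b) - ln (1+0) = ln (1+b)" by simp
  finally have *: "(\<integral>\<^sup>+ x. ennreal (1/(1+x)) * indicator {0..b} x \<partial>lborel) = ennreal (ln (1+b))" .
  have "(\<integral>\<^sup>+ x. ennreal (1/(1+x)) * indicator {0..b} x \<partial>lborel) = (\<integral>\<^sup>+ x. ennreal (indicator {0..} x / (1+x) * (if x < b then 1 else 0)) \<partial>lborel)"
  proof (rule nn_integral_cong_AE)
    show "AE x in lborel. ennreal (1/(1+x)) * indicator {0..b} x = ennreal (indicator {0..} x / (1+x) * (if x < b then 1 else 0))"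
      using AE_lborel_singleton[of b] by eventually_elim (auto split: split_indicator)
  qed
  with * show ?thesis by simp
qed

lemma z_integral:
  assumes c: "c > 0" and a: "\<alpha> > 0" and n: "1 \<le> n"
  shows "(\<integral>\<^sup>+ z. ennreal (gamma_density n z * ln (1 + \<alpha>*z/c)) \<partial>lborel)
       = (\<integral>\<^sup>+ x. ennreal (indicator {0..} x / (1+x) * tailQ n (x*c/\<alpha>)) \<partial>lborel)"
proof -
  define f where "f x z = ennreal (gamma_density n z * (indicator {0..} x / (1+x) * (if x*c/\<alpha> < z then 1 else 0)))" for x z :: real
  have fm: "(\<lambda>(x, z). f x z) \<in> borel_measurable (lborel \<Otimes>\<^sub>M lborel)"
    unfolding f_def by measurable
  have step1: "ennreal (gamma_density n z * ln (1 + \<alpha>*z/c)) = (\<integral>\<^sup>+ x. f x z \<partial>lborel)" for z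
  proof (cases "z < 0")
    case True
    then show ?thesis unfolding f_def by (simp add: gamma_density_alt)
  next
    case False
    have b: "\<alpha>*z/c \<ge> 0" using False a c by simp
    have iff: "x < \<alpha>*z/c \<longleftrightarrow> x*c/\<alpha> < z" for x using a c by (simp add: field_simps)
    have "ennreal (gamma_density n z * ln (1 + \<alpha>*z/c)) = ennreal (gamma_density n z) * ennreal (ln (1 + \<alpha>*z/c))"
      by (simp add: ennreal_mult')
    also have "\<dots> = ennreal (gamma_density n z) * (\<integral>\<^sup>+ x. ennreal (indicator {0..} x / (1+x) * (if x*c/\<alpha> < z then 1 else 0)) \<partial>lborel)"
      unfolding ln_integral[OF b] iff ..
    also have "\<dots> = (\<integral>\<^sup>+ x. ennreal (gamma_density n z) * ennreal (indicator {0..} x / (1+x) * (if x*c/\<alpha> < z then 1 else 0)) \<partial>lborel)"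
      by (rule nn_integral_cmult[symmetric]) measurable
    also have "\<dots> = (\<integral>\<^sup>+ x. f x z \<partial>lborel)"
      unfolding f_def by (intro nn_integral_cong) (simp add: ennreal_mult'[symmetric])
    finally show ?thesis .
  qed
  have step3: "(\<integral>\<^sup>+ z. f x z \<partial>lborel) = ennreal (indicator {0..} x / (1+x) * tailQ n (x*c/\<alpha>))" for x
  proof (cases "x < 0")
    case True
    then show ?thesis unfolding f_def by simp
  next
    case False
    have t: "x*c/\<alpha> \<ge> 0" using False a c by simp
    have "(\<integral>\<^sup>+ z. f x z \<partial>lborel) = (\<integral>\<^sup>+ z. ennreal (1/(1+x)) * (ennreal (gamma_density n z) * indicator {x*c/\<alpha><..} z) \<partial>lborel)"
      unfolding f_def using False by (intro nn_integral_cong) (auto simp: ennreal_mult'[symmetric] split: split_indicator)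
    also have "\<dots> = ennreal (1/(1+x)) * (\<integral>\<^sup>+ z. ennreal (gamma_density n z) * indicator {x*c/\<alpha><..} z \<partial>lborel)"
      by (rule nn_integral_cmult) measurable
    also have "\<dots> = ennreal (1/(1+x)) * ennreal (tailQ n (x*c/\<alpha>))"
      by (simp add: gamma_tail[OF n t])
    also have "\<dots> = ennreal (indicator {0..} x / (1+x) * tailQ n (x*c/\<alpha>))"
      using False by (simp add: ennreal_mult'[symmetric])
    finally show ?thesis .
  qed
  have "(\<integral>\<^sup>+ z. ennreal (gamma_density n z * ln (1 + \<alpha>*z/c)) \<partial>lborel) = (\<integral>\<^sup>+ z. \<integral>\<^sup>+ x. f x z \<partial>lborel \<partial>lborel)"
    by (simp add: step1)
  also have "\<dots> = (\<integral>\<^sup>+ x. \<integral>\<^sup>+ z. f x z \<partial>lborel \<partial>lborel)"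
    by (rule lborel_pair.Fubini'[OF fm])
  also have "\<dots> = (\<integral>\<^sup>+ x. ennreal (indicator {0..} x / (1+x) * tailQ n (x*c/\<alpha>)) \<partial>lborel)"
    by (simp add: step3)
  finally show ?thesis .
qed


definition Tfun :: "nat \<Rightarrow> nat \<Rightarrow> real \<Rightarrow> real \<Rightarrow> real \<Rightarrow> real \<Rightarrow> real" where
  "Tfun n L d1 d2 \<alpha> x = (\<Sum>i<n. \<Sum>l\<le>i. ((x/\<alpha>)^i * exp (-(x/\<alpha>)) / fact i * of_nat (i choose l)) * Pm L d1 d2 l (x/\<alpha>))"

lemma tail_expand:
  fixes s Y :: real
  shows "tailQ n (s*(1+Y)) = (\<Sum>i<n. \<Sum>l\<le>i. (s^i * exp (-s) / fact i * of_nat (i choose l)) * (Y^l * exp (-s*Y)))"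
  unfolding tailQ_def
proof (intro sum.cong refl)
  fix i
  have "(1+Y)^i = (\<Sum>l\<le>i. of_nat (i choose l) * Y^l)"
    using binomial_ring[of Y 1 i] by (simp add: add.commute)
  moreover have "exp (-(s*(1+Y))) = exp (-s) * exp (-s*Y)" by (simp add: exp_add[symmetric] algebra_simps)
  ultimately show "(s*(1+Y))^i * exp (-(s*(1+Y))) / fact i = (\<Sum>l\<le>i. (s^i * exp (-s) / fact i * of_nat (i choose l)) * (Y^l * exp (-s*Y)))"
    by (simp add: power_mult_distrib sum_distrib_left sum_distrib_right sum_divide_distrib ac_simps)
qed

lemma Pm_nonneg: assumes "s \<ge> 0" "d1 > 0" "d2 > 0" shows "0 \<le> Pm L d1 d2 m s"
  unfolding Pm_def Aa_def using assms by (intro sum_nonneg mult_nonneg_nonneg) auto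

lemma gg_nonneg: assumes "d1 > 0" "d2 > 0"
  shows "0 \<le> gamma_density L y2 * gamma_density L y1 * ((d1*y1 + d2*y2)^m * exp (-s*(d1*y1 + d2*y2)))"
  using assms by (cases "y1 < 0"; cases "y2 < 0") (auto simp: gamma_density_alt)


lemma yint:
  assumes x: "x \<ge> 0" and a: "\<alpha> > 0" and L: "1 \<le> L" and d: "d1 > 0" "d2 > 0"
  shows "(\<integral>\<^sup>+ y2. \<integral>\<^sup>+ y1. ennreal (gamma_density L y2 * gamma_density L y1 * tailQ n (x*(1 + d1*y1 + d2*y2)/\<alpha>)) \<partial>lborel \<partial>lborel)
       = ennreal (Tfun n L d1 d2 \<alpha> x)"
proof -
  define s where "s = x/\<alpha>"
  have s: "s \<ge> 0" using x a by (simp add: s_def)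
  define C where "C i l = s^i * exp (-s) / fact i * of_nat (i choose l)" for i l :: nat
  have C: "0 \<le> C i l" for i l using s unfolding C_def by simp
  define G where "G l y1 y2 = gamma_density L y2 * gamma_density L y1 * ((d1*y1 + d2*y2)^l * exp (-s*(d1*y1 + d2*y2)))" for l y1 y2
  have Gn: "0 \<le> G l y1 y2" for l y1 y2 unfolding G_def using gg_nonneg[OF d] .
  have Gm[measurable]: "(\<lambda>(y1, y2). G l y1 y2) \<in> borel_measurable (lborel \<Otimes>\<^sub>M lborel)" for l
    unfolding G_def by measurable
  have Gm1[measurable]: "(\<lambda>y1. G l y1 y2) \<in> borel_measurable lborel" for l y2
    unfolding G_def by measurable
  have pw: "ennreal (gamma_density L y2 * gamma_density L y1 * tailQ n (x*(1 + d1*y1 + d2*y2)/\<alpha>))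
      = (\<Sum>i<n. \<Sum>l\<le>i. ennreal (C i l) * ennreal (G l y1 y2))" for y1 y2
  proof -
    have "x*(1 + d1*y1 + d2*y2)/\<alpha> = s*(1 + (d1*y1 + d2*y2))" unfolding s_def by (simp add: algebra_simps add_divide_distrib)
    then have e: "tailQ n (x*(1 + d1*y1 + d2*y2)/\<alpha>) = tailQ n (s*(1 + (d1*y1 + d2*y2)))" by simp
    have "gamma_density L y2 * gamma_density L y1 * tailQ n (x*(1 + d1*y1 + d2*y2)/\<alpha>)
       = (\<Sum>i<n. \<Sum>l\<le>i. C i l * G l y1 y2)"
      unfolding e tail_expand C_def G_def by (simp add: sum_distrib_left ac_simps)
    also have "ennreal \<dots> = (\<Sum>i<n. \<Sum>l\<le>i. ennreal (C i l * G l y1 y2))"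
      by (simp add: sum_ennreal C Gn sum_nonneg)
    finally show ?thesis by (simp add: ennreal_mult C Gn)
  qed
  have "(\<integral>\<^sup>+ y2. \<integral>\<^sup>+ y1. ennreal (gamma_density L y2 * gamma_density L y1 * tailQ n (x*(1 + d1*y1 + d2*y2)/\<alpha>)) \<partial>lborel \<partial>lborel)
     = (\<integral>\<^sup>+ y2. (\<Sum>i<n. \<Sum>l\<le>i. ennreal (C i l) * (\<integral>\<^sup>+ y1. ennreal (G l y1 y2) \<partial>lborel)) \<partial>lborel)"
    unfolding pw
  proof (intro nn_integral_cong)
    fix y2
    have "(\<integral>\<^sup>+ y1. (\<Sum>i<n. \<Sum>l\<le>i. ennreal (C i l) * ennreal (G l y1 y2)) \<partial>lborel)
       = (\<Sum>i<n. \<integral>\<^sup>+ y1. (\<Sum>l\<le>i. ennreal (C i l) * ennreal (G l y1 y2)) \<partial>lborel)"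
      by (rule nn_integral_sum) measurable
    also have "\<dots> = (\<Sum>i<n. \<Sum>l\<le>i. \<integral>\<^sup>+ y1. ennreal (C i l) * ennreal (G l y1 y2) \<partial>lborel)"
      by (intro sum.cong refl nn_integral_sum) measurable
    also have "\<dots> = (\<Sum>i<n. \<Sum>l\<le>i. ennreal (C i l) * (\<integral>\<^sup>+ y1. ennreal (G l y1 y2) \<partial>lborel))"
      by (intro sum.cong refl nn_integral_cmult) measurable
    finally show "(\<integral>\<^sup>+ y1. (\<Sum>i<n. \<Sum>l\<le>i. ennreal (C i l) * ennreal (G l y1 y2)) \<partial>lborel)
       = (\<Sum>i<n. \<Sum>l\<le>i. ennreal (C i l) * (\<integral>\<^sup>+ y1. ennreal (G l y1 y2) \<partial>lborel))" .
  qed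
  also have "\<dots> = (\<Sum>i<n. \<Sum>l\<le>i. ennreal (C i l) * (\<integral>\<^sup>+ y2. \<integral>\<^sup>+ y1. ennreal (G l y1 y2) \<partial>lborel \<partial>lborel))"
  proof -
    have "(\<integral>\<^sup>+ y2. (\<Sum>i<n. \<Sum>l\<le>i. ennreal (C i l) * (\<integral>\<^sup>+ y1. ennreal (G l y1 y2) \<partial>lborel)) \<partial>lborel)
       = (\<Sum>i<n. \<integral>\<^sup>+ y2. (\<Sum>l\<le>i. ennreal (C i l) * (\<integral>\<^sup>+ y1. ennreal (G l y1 y2) \<partial>lborel)) \<partial>lborel)"
      by (rule nn_integral_sum) measurable
    also have "\<dots> = (\<Sum>i<n. \<Sum>l\<le>i. \<integral>\<^sup>+ y2. ennreal (C i l) * (\<integral>\<^sup>+ y1. ennreal (G l y1 y2) \<partial>lborel) \<partial>lborel)"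
      by (intro sum.cong refl nn_integral_sum) measurable
    also have "\<dots> = (\<Sum>i<n. \<Sum>l\<le>i. ennreal (C i l) * (\<integral>\<^sup>+ y2. \<integral>\<^sup>+ y1. ennreal (G l y1 y2) \<partial>lborel \<partial>lborel))"
      by (intro sum.cong refl nn_integral_cmult) measurable
    finally show ?thesis .
  qed
  also have "\<dots> = (\<Sum>i<n. \<Sum>l\<le>i. ennreal (C i l) * ennreal (Pm L d1 d2 l s))"
    unfolding G_def using J_lemma[OF s d L] by simp
  also have "\<dots> = ennreal (Tfun n L d1 d2 \<alpha> x)"
  proof -
    have "(\<Sum>i<n. \<Sum>l\<le>i. ennreal (C i l) * ennreal (Pm L d1 d2 l s)) = (\<Sum>i<n. \<Sum>l\<le>i. ennreal (C i l * Pm L d1 d2 l s))"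
      by (simp add: ennreal_mult C Pm_nonneg[OF s d])
    also have "\<dots> = ennreal (\<Sum>i<n. \<Sum>l\<le>i. C i l * Pm L d1 d2 l s)"
      by (simp add: C Pm_nonneg[OF s d] sum_nonneg)
    finally show ?thesis unfolding Tfun_def C_def s_def .
  qed
  finally show ?thesis .
qed


lemma triple:
  assumes a: "\<alpha> > 0" and L: "1 \<le> L" and n: "1 \<le> n" and d: "d1 > 0" "d2 > 0"
  shows "(\<integral>\<^sup>+ y2. ennreal (gamma_density L y2) * (\<integral>\<^sup>+ y1. ennreal (gamma_density L y1) *
           (\<integral>\<^sup>+ z. ennreal (gamma_density n z) * ennreal (ln (1 + \<alpha>*z/(1 + d1*y1 + d2*y2))) \<partial>lborel) \<partial>lborel) \<partial>lborel)
       = (\<integral>\<^sup>+ x. ennreal (indicator {0..} x / (1+x) * Tfun n L d1 d2 \<alpha> x) \<partial>lborel)"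
proof -
  define F where "F x y1 y2 = ennreal (gamma_density L y2 * gamma_density L y1 * (indicator {0..} x / (1+x) * tailQ n (x*(1 + d1*y1 + d2*y2)/\<alpha>)))" for x y1 y2 :: real
  have Fm[measurable]: "(\<lambda>(x, y1). F x y1 y2) \<in> borel_measurable (lborel \<Otimes>\<^sub>M lborel)" for y2
    unfolding F_def tailQ_def by measurable
  have Fm2[measurable]: "(\<lambda>p. F (fst (fst p)) (snd p) (snd (fst p))) \<in> borel_measurable ((lborel \<Otimes>\<^sub>M lborel) \<Otimes>\<^sub>M lborel)"
    unfolding F_def tailQ_def by measurable
  have s1: "ennreal (gamma_density L y2) * (ennreal (gamma_density L y1) *
           (\<integral>\<^sup>+ z. ennreal (gamma_density n z) * ennreal (ln (1 + \<alpha>*z/(1 + d1*y1 + d2*y2))) \<partial>lborel))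
        = (\<integral>\<^sup>+ x. F x y1 y2 \<partial>lborel)" for y1 y2
  proof (cases "y1 < 0 \<or> y2 < 0")
    case True
    then show ?thesis unfolding F_def by (auto simp: gamma_density_alt)
  next
    case False
    have c: "1 + d1*y1 + d2*y2 > 0" using False d by (smt (verit) mult_nonneg_nonneg)
    have "(\<integral>\<^sup>+ z. ennreal (gamma_density n z) * ennreal (ln (1 + \<alpha>*z/(1 + d1*y1 + d2*y2))) \<partial>lborel)
        = (\<integral>\<^sup>+ z. ennreal (gamma_density n z * ln (1 + \<alpha>*z/(1 + d1*y1 + d2*y2))) \<partial>lborel)"
      by (intro nn_integral_cong) (simp add: ennreal_mult')
    also have "\<dots> = (\<integral>\<^sup>+ x. ennreal (indicator {0..} x / (1+x) * tailQ n (x*(1 + d1*y1 + d2*y2)/\<alpha>)) \<partial>lborel)"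
      by (rule z_integral[OF c a n])
    finally have e: "(\<integral>\<^sup>+ z. ennreal (gamma_density n z) * ennreal (ln (1 + \<alpha>*z/(1 + d1*y1 + d2*y2))) \<partial>lborel)
        = (\<integral>\<^sup>+ x. ennreal (indicator {0..} x / (1+x) * tailQ n (x*(1 + d1*y1 + d2*y2)/\<alpha>)) \<partial>lborel)" .
    have "ennreal (gamma_density L y2) * (ennreal (gamma_density L y1) *
           (\<integral>\<^sup>+ x. ennreal (indicator {0..} x / (1+x) * tailQ n (x*(1 + d1*y1 + d2*y2)/\<alpha>)) \<partial>lborel))
        = ennreal (gamma_density L y2 * gamma_density L y1) * (\<integral>\<^sup>+ x. ennreal (indicator {0..} x / (1+x) * tailQ n (x*(1 + d1*y1 + d2*y2)/\<alpha>)) \<partial>lborel)"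
      by (simp add: ennreal_mult' mult.assoc)
    also have "\<dots> = (\<integral>\<^sup>+ x. ennreal (gamma_density L y2 * gamma_density L y1) * ennreal (indicator {0..} x / (1+x) * tailQ n (x*(1 + d1*y1 + d2*y2)/\<alpha>)) \<partial>lborel)"
      by (rule nn_integral_cmult[symmetric]) (unfold tailQ_def, measurable)
    also have "\<dots> = (\<integral>\<^sup>+ x. F x y1 y2 \<partial>lborel)"
      unfolding F_def by (intro nn_integral_cong) (simp add: ennreal_mult'[symmetric])
    finally show ?thesis unfolding e .
  qed
  have s4: "(\<integral>\<^sup>+ y2. \<integral>\<^sup>+ y1. F x y1 y2 \<partial>lborel \<partial>lborel) = ennreal (indicator {0..} x / (1+x) * Tfun n L d1 d2 \<alpha> x)" for x
  proof (cases "x < 0")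
    case True
    then show ?thesis unfolding F_def by simp
  next
    case False
    then have x: "x \<ge> 0" by simp
    have "(\<integral>\<^sup>+ y2. \<integral>\<^sup>+ y1. F x y1 y2 \<partial>lborel \<partial>lborel)
       = (\<integral>\<^sup>+ y2. \<integral>\<^sup>+ y1. ennreal (1/(1+x)) * ennreal (gamma_density L y2 * gamma_density L y1 * tailQ n (x*(1 + d1*y1 + d2*y2)/\<alpha>)) \<partial>lborel \<partial>lborel)"
      unfolding F_def using x by (intro nn_integral_cong) (simp add: ennreal_mult'[symmetric] ac_simps)
    also have "\<dots> = (\<integral>\<^sup>+ y2. ennreal (1/(1+x)) * \<integral>\<^sup>+ y1. ennreal (gamma_density L y2 * gamma_density L y1 * tailQ n (x*(1 + d1*y1 + d2*y2)/\<alpha>)) \<partial>lborel \<partial>lborel)"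
      by (intro nn_integral_cong nn_integral_cmult) (unfold tailQ_def, measurable)
    also have "\<dots> = ennreal (1/(1+x)) * (\<integral>\<^sup>+ y2. \<integral>\<^sup>+ y1. ennreal (gamma_density L y2 * gamma_density L y1 * tailQ n (x*(1 + d1*y1 + d2*y2)/\<alpha>)) \<partial>lborel \<partial>lborel)"
      by (rule nn_integral_cmult) (unfold tailQ_def, measurable)
    also have "\<dots> = ennreal (1/(1+x)) * ennreal (Tfun n L d1 d2 \<alpha> x)"
      by (simp add: yint[OF x a L d])
    also have "\<dots> = ennreal (indicator {0..} x / (1+x) * Tfun n L d1 d2 \<alpha> x)"
      using x by (simp add: ennreal_mult'[symmetric])
    finally show ?thesis .
  qed
  have "(\<integral>\<^sup>+ y2. ennreal (gamma_density L y2) * (\<integral>\<^sup>+ y1. ennreal (gamma_density L y1) *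
           (\<integral>\<^sup>+ z. ennreal (gamma_density n z) * ennreal (ln (1 + \<alpha>*z/(1 + d1*y1 + d2*y2))) \<partial>lborel) \<partial>lborel) \<partial>lborel)
      = (\<integral>\<^sup>+ y2. (\<integral>\<^sup>+ y1. ennreal (gamma_density L y2) * (ennreal (gamma_density L y1) *
           (\<integral>\<^sup>+ z. ennreal (gamma_density n z) * ennreal (ln (1 + \<alpha>*z/(1 + d1*y1 + d2*y2))) \<partial>lborel)) \<partial>lborel) \<partial>lborel)"
    by (intro nn_integral_cong nn_integral_cmult[symmetric]) measurable
  also have "\<dots> = (\<integral>\<^sup>+ y2. \<integral>\<^sup>+ y1. \<integral>\<^sup>+ x. F x y1 y2 \<partial>lborel \<partial>lborel \<partial>lborel)"
    by (simp add: s1)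
  also have "\<dots> = (\<integral>\<^sup>+ y2. \<integral>\<^sup>+ x. \<integral>\<^sup>+ y1. F x y1 y2 \<partial>lborel \<partial>lborel \<partial>lborel)"
    by (intro nn_integral_cong lborel_pair.Fubini') measurable
  also have "\<dots> = (\<integral>\<^sup>+ x. \<integral>\<^sup>+ y2. \<integral>\<^sup>+ y1. F x y1 y2 \<partial>lborel \<partial>lborel \<partial>lborel)"
    by (rule lborel_pair.Fubini'[where f="\<lambda>x y2. \<integral>\<^sup>+ y1. F x y1 y2 \<partial>lborel"]) measurable
  also have "\<dots> = (\<integral>\<^sup>+ x. ennreal (indicator {0..} x / (1+x) * Tfun n L d1 d2 \<alpha> x) \<partial>lborel)"
    by (simp add: s4)
  finally show ?thesis .
qed


lemma gamma_prob: "prob_space (density lborel (\<lambda>x. ennreal (gamma_density n x)))"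
  unfolding gamma_density_def by (rule prob_space_erlang_density) simp

lemma reduce3:
  fixes D :: "nat \<Rightarrow> real measure" and h :: "real \<Rightarrow> real \<Rightarrow> real \<Rightarrow> ennreal"
  assumes psf: "product_sigma_finite D"
    and sD: "\<And>i. sets (D i) = sets borel"
    and hm: "(\<lambda>(a, b, c). h a b c) \<in> borel_measurable (borel \<Otimes>\<^sub>M borel \<Otimes>\<^sub>M borel)"
  shows "(\<integral>\<^sup>+ v. h (v 0) (v 1) (v 2) \<partial>(PiM {0,1,2} D))
       = (\<integral>\<^sup>+ y2. \<integral>\<^sup>+ y1. \<integral>\<^sup>+ z. h z y1 y2 \<partial>D 0 \<partial>D 1 \<partial>D 2)"
proof -
  interpret product_sigma_finite D by (rule psf)
  have hm'[measurable (raw)]: "(\<lambda>x. h (f x) (g x) (k x)) \<in> borel_measurable N"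
    if [measurable]: "f \<in> borel_measurable N" "g \<in> borel_measurable N" "k \<in> borel_measurable N" for N :: "'x measure" and f g k
  proof -
    have "(\<lambda>x. (f x, g x, k x)) \<in> measurable N (borel \<Otimes>\<^sub>M borel \<Otimes>\<^sub>M borel)" by measurable
    from measurable_compose[OF this hm] show ?thesis by simp
  qed
  have mD[measurable_cong]: "sets (D i) = sets borel" for i by (rule sD)
  interpret D0: sigma_finite_measure "D 0" by (rule sigma_finite_measures)
  interpret D1: sigma_finite_measure "D 1" by (rule sigma_finite_measures)
  have pm1: "(\<lambda>v. h (v 0) (v 1) (v 2)) \<in> borel_measurable (PiM (insert 0 {1,2}) D)"
    by measurable
  have pm2: "(\<lambda>v. \<integral>\<^sup>+ z. h z (v 1) (v 2) \<partial>D 0) \<in> borel_measurable (PiM (insert 1 {2}) D)"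
    by measurable
  have pm3: "(\<lambda>y2. \<integral>\<^sup>+ y1. \<integral>\<^sup>+ z. h z y1 y2 \<partial>D 0 \<partial>D 1) \<in> borel_measurable (D 2)"
    by measurable
  have "(\<integral>\<^sup>+ v. h (v 0) (v 1) (v 2) \<partial>(PiM {0,1,2} D))
      = (\<integral>\<^sup>+ v. (\<integral>\<^sup>+ z. h ((v(0:=z)) 0) ((v(0:=z)) 1) ((v(0:=z)) 2) \<partial>D 0) \<partial>PiM {1,2} D)"
    by (rule product_nn_integral_insert[OF _ _ pm1]) auto
  also have "\<dots> = (\<integral>\<^sup>+ v. (\<integral>\<^sup>+ z. h z (v 1) (v 2) \<partial>D 0) \<partial>PiM {1,2} D)"
    by simp
  also have "\<dots> = (\<integral>\<^sup>+ w. (\<integral>\<^sup>+ y1. (\<integral>\<^sup>+ z. h z ((w(1:=y1)) 1) ((w(1:=y1)) 2) \<partial>D 0) \<partial>D 1) \<partial>PiM {2} D)"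
    by (rule product_nn_integral_insert[OF _ _ pm2]) auto
  also have "\<dots> = (\<integral>\<^sup>+ w. (\<integral>\<^sup>+ y1. (\<integral>\<^sup>+ z. h z y1 (w 2) \<partial>D 0) \<partial>D 1) \<partial>PiM {2} D)"
    by simp
  also have "\<dots> = (\<integral>\<^sup>+ y2. \<integral>\<^sup>+ y1. \<integral>\<^sup>+ z. h z y1 y2 \<partial>D 0 \<partial>D 1 \<partial>D 2)"
    by (rule product_nn_integral_singleton[OF pm3])
  finally show ?thesis .
qed


lemma expect_nn:
  fixes M :: "'w measure" and N L :: nat and \<alpha> \<delta>1 \<delta>2 :: real
    and z y1 y2 :: "'w \<Rightarrow> real"
  assumes "prob_space M"
    and "1 \<le> L" and "L \<le> N - 1"
    and "\<alpha> > 0" and "\<delta>1 > 0" and "\<delta>2 > 0"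
    and "prob_space.indep_vars M (\<lambda>_. borel) (\<lambda>i. if i = (0::nat) then z else if i = 1 then y1 else y2) {0, 1, 2}"
    and "distributed M lborel z (gamma_density (N - L))"
    and "distributed M lborel y1 (gamma_density L)"
    and "distributed M lborel y2 (gamma_density L)"
  shows "(\<integral>\<^sup>+ \<omega>. ennreal (ln (1 + \<alpha> * z \<omega> / (1 + \<delta>1 * y1 \<omega> + \<delta>2 * y2 \<omega>))) \<partial>M)
       = (\<integral>\<^sup>+ x. ennreal (indicator {0..} x / (1+x) * Tfun (N-L) L \<delta>1 \<delta>2 \<alpha> x) \<partial>lborel)"
proof -
  interpret prob_space M by fact
  define X where "X = (\<lambda>i. if i = (0::nat) then z else if i = 1 then y1 else y2)"
  define I where "I = {0::nat, 1, 2}"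
  define gd where "gd i = gamma_density (if i = 0 then N - L else L)" for i :: nat
  define D where "D i = density lborel (\<lambda>x. ennreal (gd i x))" for i
  define H where "H a b c = ennreal (ln (1 + \<alpha> * a / (1 + \<delta>1 * b + \<delta>2 * c)))" for a b c
  have n: "1 \<le> N - L" using assms by simp
  have distX: "distributed M lborel (X i) (gd i)" for i
    unfolding X_def gd_def using assms by auto
  have rv: "random_variable borel (X i)" for i
    using distributed_measurable[OF distX[of i]] by simp
  have ind: "indep_vars (\<lambda>_. borel) X I" using assms unfolding X_def I_def by simp
  have dPi: "distr M (PiM I (\<lambda>_. borel)) (\<lambda>\<omega>. \<lambda>i\<in>I. X i \<omega>) = PiM I (\<lambda>i. distr M borel (X i))"
    using ind indep_vars_iff_distr_eq_PiM[where I=I and M'="\<lambda>_. borel" and X=X] rv unfolding I_def by simp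
  have dD: "distr M borel (X i) = D i" for i
  proof -
    have "distr M borel (X i) = distr M lborel (X i)" by (rule distr_cong) auto
    also have "\<dots> = D i" unfolding D_def by (rule distributed_distr_eq_density[OF distX])
    finally show ?thesis .
  qed
  have "sigma_finite_measure (D i)" for i
  proof -
    have "prob_space (D i)" unfolding D_def gd_def by (rule gamma_prob)
    then show "sigma_finite_measure (D i)" by (rule prob_space_imp_sigma_finite)
  qed
  then have psf: "product_sigma_finite D" by (intro product_sigma_finite.intro)
  have dD': "(\<lambda>i. distr M borel (X i)) = D" by (rule ext) (rule dD)
  have sD: "sets (D i) = sets borel" for i unfolding D_def by simp
  have Hm[measurable]: "(\<lambda>(a, b, c). H a b c) \<in> borel_measurable (borel \<Otimes>\<^sub>M borel \<Otimes>\<^sub>M borel)"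
    unfolding H_def by measurable
  have Hm'[measurable (raw)]: "(\<lambda>x. H (f x) (g x) (k x)) \<in> borel_measurable N"
    if [measurable]: "f \<in> borel_measurable N" "g \<in> borel_measurable N" "k \<in> borel_measurable N" for N :: "'x measure" and f g k
  proof -
    have "(\<lambda>x. (f x, g x, k x)) \<in> measurable N (borel \<Otimes>\<^sub>M borel \<Otimes>\<^sub>M borel)" by measurable
    from measurable_compose[OF this Hm] show ?thesis by simp
  qed
  have Tm: "(\<lambda>\<omega>. \<lambda>i\<in>I. X i \<omega>) \<in> measurable M (PiM I (\<lambda>_. borel))"
    using rv by (intro measurable_restrict) auto
  have "(\<integral>\<^sup>+ \<omega>. ennreal (ln (1 + \<alpha> * z \<omega> / (1 + \<delta>1 * y1 \<omega> + \<delta>2 * y2 \<omega>))) \<partial>M)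
      = (\<integral>\<^sup>+ \<omega>. (\<lambda>v. H (v 0) (v 1) (v 2)) (\<lambda>i\<in>I. X i \<omega>) \<partial>M)"
    unfolding H_def X_def I_def by simp
  also have "\<dots> = (\<integral>\<^sup>+ v. H (v 0) (v 1) (v 2) \<partial>distr M (PiM I (\<lambda>_. borel)) (\<lambda>\<omega>. \<lambda>i\<in>I. X i \<omega>))"
    by (rule nn_integral_distr[symmetric, OF Tm]) (unfold I_def, measurable)
  also have "\<dots> = (\<integral>\<^sup>+ v. H (v 0) (v 1) (v 2) \<partial>PiM {0,1,2} D)"
    using dPi dD' unfolding I_def by simp
  also have "\<dots> = (\<integral>\<^sup>+ y2. \<integral>\<^sup>+ y1. \<integral>\<^sup>+ z. H z y1 y2 \<partial>D 0 \<partial>D 1 \<partial>D 2)"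
    by (rule reduce3[OF psf sD Hm])
  also have "\<dots> = (\<integral>\<^sup>+ y2. ennreal (gamma_density L y2) * (\<integral>\<^sup>+ y1. ennreal (gamma_density L y1) *
           (\<integral>\<^sup>+ z. ennreal (gamma_density (N-L) z) * ennreal (ln (1 + \<alpha>*z/(1 + \<delta>1*y1 + \<delta>2*y2))) \<partial>lborel) \<partial>lborel) \<partial>lborel)"
  proof -
    have i0: "(\<integral>\<^sup>+ z. H z y1 y2 \<partial>D 0) = (\<integral>\<^sup>+ z. ennreal (gamma_density (N-L) z) * ennreal (ln (1 + \<alpha>*z/(1 + \<delta>1*y1 + \<delta>2*y2))) \<partial>lborel)" for y1 y2
      unfolding D_def gd_def H_def by (subst nn_integral_density) (auto simp: mult.commute)
    have i1: "(\<integral>\<^sup>+ y1. (\<integral>\<^sup>+ z. ennreal (gamma_density (N-L) z) * ennreal (ln (1 + \<alpha>*z/(1 + \<delta>1*y1 + \<delta>2*y2))) \<partial>lborel) \<partial>D 1)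
       = (\<integral>\<^sup>+ y1. ennreal (gamma_density L y1) * (\<integral>\<^sup>+ z. ennreal (gamma_density (N-L) z) * ennreal (ln (1 + \<alpha>*z/(1 + \<delta>1*y1 + \<delta>2*y2))) \<partial>lborel) \<partial>lborel)" for y2
      unfolding D_def gd_def by (subst nn_integral_density) (auto, measurable)
    have i2: "(\<integral>\<^sup>+ y2. (\<integral>\<^sup>+ y1. ennreal (gamma_density L y1) * (\<integral>\<^sup>+ z. ennreal (gamma_density (N-L) z) * ennreal (ln (1 + \<alpha>*z/(1 + \<delta>1*y1 + \<delta>2*y2))) \<partial>lborel) \<partial>lborel) \<partial>D 2)
       = (\<integral>\<^sup>+ y2. ennreal (gamma_density L y2) * (\<integral>\<^sup>+ y1. ennreal (gamma_density L y1) * (\<integral>\<^sup>+ z. ennreal (gamma_density (N-L) z) * ennreal (ln (1 + \<alpha>*z/(1 + \<delta>1*y1 + \<delta>2*y2))) \<partial>lborel) \<partial>lborel) \<partial>lborel)"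
      unfolding D_def gd_def by (subst nn_integral_density) (auto, measurable)
    show ?thesis unfolding i0 i1 i2 ..
  qed
  also have "\<dots> = (\<integral>\<^sup>+ x. ennreal (indicator {0..} x / (1+x) * Tfun (N-L) L \<delta>1 \<delta>2 \<alpha> x) \<partial>lborel)"
    by (rule triple) (use assms n in auto)
  finally show ?thesis .
qed


lemma pw_term:
  fixes x \<alpha> \<delta> c :: real
  assumes x: "x > 0" and a: "\<alpha> > 0" and d: "\<delta> > 0" and li: "l \<le> i"
  shows "((x/\<alpha>)^i * exp (-(x/\<alpha>)) / fact i * of_nat (i choose l)) * (c * fact (l+k) / (x/\<alpha> + 1/\<delta>)^(l+k+1)) / (1+x)
       = c * fact (l+k) / (fact l * fact (i-l)) * \<alpha> powi (int l + int k - int i + 1)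
         * (x^i * exp (-(1/\<alpha>)*x) / ((x + \<alpha>/\<delta>)^(l+k+1) * (x+1)))"
proof -
  have b: "(of_nat (i choose l) :: real) = fact i / (fact l * fact (i-l))" using binomial_fact[OF li] by simp
  have e1: "x/\<alpha> + 1/\<delta> = (x + \<alpha>/\<delta>)/\<alpha>" using a d by (simp add: field_simps)
  have p: "\<alpha> powi (int l + int k - int i + 1) = \<alpha>^(l+k+1) / \<alpha>^i"
  proof -
    have "int l + int k - int i + 1 = int (l+k+1) - int i" by simp
    then have "\<alpha> powi (int l + int k - int i + 1) = \<alpha> powi (int (l+k+1) - int i)" by (simp only:)
    also have "\<dots> = \<alpha> powi int (l+k+1) / \<alpha> powi int i" by (rule power_int_diff) (use a in simp)
    also have "\<dots> = \<alpha>^(l+k+1) / \<alpha>^i" by (simp only: power_int_of_nat)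
    finally show ?thesis .
  qed
  have e2: "exp (-(1/\<alpha>)*x) = exp (-(x/\<alpha>))" by simp
  have pos: "x + \<alpha>/\<delta> > 0" using x a d by (simp add: add_pos_pos)
  show ?thesis unfolding b e1 p e2 power_divide
    using a pos x by (simp add: field_simps)
qed


lemma erlang_moment_integrable:
  assumes "l > 0"
  shows "integrable lborel (\<lambda>x. erlang_density k l x * x^i)"
proof (rule integrableI_nonneg)
  show "(\<lambda>x. erlang_density k l x * x^i) \<in> borel_measurable lborel" by measurable
  show "AE x in lborel. 0 \<le> erlang_density k l x * x^i"
    using assms by (intro AE_I2) (auto simp: erlang_density_def)
  show "(\<integral>\<^sup>+ x. ennreal (erlang_density k l x * x^i) \<partial>lborel) < \<infinity>"
    using nn_integral_erlang_ith_moment[OF assms, of k i] by simp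
qed

lemma term_integrable:
  fixes \<alpha> b :: real
  assumes a: "\<alpha> > 0" and b: "b > 0"
  shows "set_integrable lborel {0<..} (\<lambda>x. x^i * exp (-(1/\<alpha>)*x) / ((x + b)^p * (x+1)))"
  unfolding set_integrable_def
proof (rule Bochner_Integration.integrable_bound[where f="\<lambda>x. (\<alpha> / b^p) * (erlang_density 0 (1/\<alpha>) x * x^i)"])
  show "integrable lborel (\<lambda>x. (\<alpha> / b^p) * (erlang_density 0 (1/\<alpha>) x * x^i))"
    using erlang_moment_integrable[of "1/\<alpha>" 0 i] a by (intro integrable_mult_right) simp
  show "(\<lambda>x. indicator {0<..} x *\<^sub>R (x^i * exp (-(1/\<alpha>)*x) / ((x + b)^p * (x+1)))) \<in> borel_measurable lborel"
    by measurable
  show "AE x in lborel. norm (indicator {0<..} x *\<^sub>R (x^i * exp (-(1/\<alpha>)*x) / ((x + b)^p * (x+1))))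
      \<le> norm ((\<alpha> / b^p) * (erlang_density 0 (1/\<alpha>) x * x^i))"
  proof (intro AE_I2)
    fix x :: real
    show "norm (indicator {0<..} x *\<^sub>R (x^i * exp (-(1/\<alpha>)*x) / ((x + b)^p * (x+1))))
      \<le> norm ((\<alpha> / b^p) * (erlang_density 0 (1/\<alpha>) x * x^i))"
    proof (cases "x > 0")
      case False then show ?thesis by simp
    next
      case True
      have d: "b^p \<le> (x+b)^p * (x+1)"
      proof -
        have "b^p \<le> (x+b)^p" using True b by (intro power_mono) auto
        also have "\<dots> \<le> (x+b)^p * (x+1)" using True b by (simp add: mult_le_cancel_left1)
        finally show ?thesis .
      qed
      have nn: "0 \<le> x^i * exp (-(1/\<alpha>)*x)" using True by simp
      have "x^i * exp (-(1/\<alpha>)*x) / ((x + b)^p * (x+1)) \<le> x^i * exp (-(1/\<alpha>)*x) / b^p"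
        using d b True by (intro divide_left_mono nn) auto
      also have "\<dots> = (\<alpha> / b^p) * (erlang_density 0 (1/\<alpha>) x * x^i)"
        using True a b by (simp add: erlang_density_def field_simps)
      finally show ?thesis using True a b nn by (simp add: erlang_density_def)
    qed
  qed
qed


lemma F_pointwise:
  fixes \<alpha> \<delta>1 \<delta>2 x :: real
  assumes x: "x > 0" and a: "\<alpha> > 0" and L: "1 \<le> L" and d: "\<delta>1 > 0" "\<delta>2 > 0" "\<delta>1 \<noteq> \<delta>2" and n: "1 \<le> n"
  shows "indicator {0..} x / (1+x) * Tfun n L \<delta>1 \<delta>2 \<alpha> x
    = (\<Sum>i = 0..n - 1. \<Sum>j \<in> {1, 2}. \<Sum>k = 0..L - 1. \<Sum>l = 0..i.
            coef L \<delta>1 \<delta>2 j k * fact (l + k) / (fact l * fact (i - l))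
            * \<alpha> powi (int l + int k - int i + 1)
            * (indicator {0<..} x *\<^sub>R (x^i * exp (-(1/\<alpha>)*x) / ((x + \<alpha> / delta \<delta>1 \<delta>2 j)^(l+k+1) * (x+1)))))"
proof -
  define s where "s = x/\<alpha>"
  have s: "s > 0" using x a by (simp add: s_def)
  define A where "A i l = (s^i * exp (-s) / fact i * of_nat (i choose l))" for i l :: nat
  have dpos: "delta \<delta>1 \<delta>2 j > 0" for j using d by (simp add: delta_def)
  have "indicator {0..} x / (1+x) * Tfun n L \<delta>1 \<delta>2 \<alpha> x = (\<Sum>i<n. \<Sum>l\<le>i. A i l * Rm L \<delta>1 \<delta>2 l s) / (1+x)"
    unfolding Tfun_def s_def[symmetric] A_def[symmetric] using x Pm_Rm[OF L d s] by simp
  also have "\<dots> = (\<Sum>i<n. \<Sum>l\<le>i. \<Sum>j\<in>{1,2}. \<Sum>k=0..L-1. A i l * (coef L \<delta>1 \<delta>2 j k * fact (l+k) / (s + 1/delta \<delta>1 \<delta>2 j)^(l+k+1)) / (1+x))"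
    unfolding Rm_def by (simp only: sum_distrib_left sum_divide_distrib)
  also have "\<dots> = (\<Sum>i<n. \<Sum>l\<le>i. \<Sum>j\<in>{1,2}. \<Sum>k=0..L-1. coef L \<delta>1 \<delta>2 j k * fact (l + k) / (fact l * fact (i - l))
            * \<alpha> powi (int l + int k - int i + 1)
            * (indicator {0<..} x *\<^sub>R (x^i * exp (-(1/\<alpha>)*x) / ((x + \<alpha> / delta \<delta>1 \<delta>2 j)^(l+k+1) * (x+1)))))"
  proof (intro sum.cong refl)
    fix i l j k :: nat assume "i \<in> {..<n}" "l \<in> {..i}" "j \<in> {1,2}" "k \<in> {0..L-1}"
    then have li: "l \<le> i" by simp
    show "A i l * (coef L \<delta>1 \<delta>2 j k * fact (l+k) / (s + 1/delta \<delta>1 \<delta>2 j)^(l+k+1)) / (1+x) =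
      coef L \<delta>1 \<delta>2 j k * fact (l + k) / (fact l * fact (i - l))
            * \<alpha> powi (int l + int k - int i + 1)
            * (indicator {0<..} x *\<^sub>R (x^i * exp (-(1/\<alpha>)*x) / ((x + \<alpha> / delta \<delta>1 \<delta>2 j)^(l+k+1) * (x+1))))"
      unfolding A_def s_def using pw_term[OF x a dpos[of j] li, of "coef L \<delta>1 \<delta>2 j k" k] x by simp
  qed
  also have "\<dots> = (\<Sum>i<n. \<Sum>j\<in>{1,2}. \<Sum>k=0..L-1. \<Sum>l\<le>i. coef L \<delta>1 \<delta>2 j k * fact (l + k) / (fact l * fact (i - l))
            * \<alpha> powi (int l + int k - int i + 1)
            * (indicator {0<..} x *\<^sub>R (x^i * exp (-(1/\<alpha>)*x) / ((x + \<alpha> / delta \<delta>1 \<delta>2 j)^(l+k+1) * (x+1)))))"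
    by (rule sum.cong[OF refl], subst sum.swap, rule sum.cong[OF refl], rule sum.swap)
  also have "\<dots> = (\<Sum>i = 0..n - 1. \<Sum>j \<in> {1, 2}. \<Sum>k = 0..L - 1. \<Sum>l = 0..i.
            coef L \<delta>1 \<delta>2 j k * fact (l + k) / (fact l * fact (i - l))
            * \<alpha> powi (int l + int k - int i + 1)
            * (indicator {0<..} x *\<^sub>R (x^i * exp (-(1/\<alpha>)*x) / ((x + \<alpha> / delta \<delta>1 \<delta>2 j)^(l+k+1) * (x+1)))))"
  proof -
    have e1: "{..<n} = {0..n-1}" using n by auto
    have e2: "\<And>i::nat. {..i} = {0..i}" by auto
    show ?thesis unfolding e1 e2 ..
  qed
  finally show ?thesis .
qed


lemma Tfun_nonneg:
  assumes "x \<ge> 0" "\<alpha> > 0" "d1 > 0" "d2 > 0"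
  shows "0 \<le> Tfun n L d1 d2 \<alpha> x"
  unfolding Tfun_def using assms
  by (intro sum_nonneg mult_nonneg_nonneg Pm_nonneg) auto

lemma gamma_AE_nonneg:
  assumes "distributed M lborel X (gamma_density k)"
  shows "AE \<omega> in M. 0 \<le> X \<omega>"
proof -
  have "AE x in density lborel (\<lambda>x. ennreal (gamma_density k x)). 0 \<le> x"
    by (subst AE_density) (auto simp: gamma_density_alt split: if_splits)
  then have "AE x in distr M lborel X. 0 \<le> x"
    unfolding distributed_distr_eq_density[OF assms] .
  then show ?thesis by (rule AE_distrD[OF distributed_measurable[OF assms]])
qed

theorem mainTheorem1:
  fixes M :: "'w measure" and N L :: nat and \<alpha> \<delta>1 \<delta>2 :: real
    and z y1 y2 :: "'w \<Rightarrow> real"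
  assumes "prob_space M"
    and "1 \<le> L" and "L \<le> N - 1"
    and "\<alpha> > 0" and "\<delta>1 > 0" and "\<delta>2 > 0" and "\<delta>1 \<noteq> \<delta>2"
    and "prob_space.indep_vars M (\<lambda>_. borel) (\<lambda>i. if i = (0::nat) then z else if i = 1 then y1 else y2) {0, 1, 2}"
    and "distributed M lborel z (gamma_density (N - L))"
    and "distributed M lborel y1 (gamma_density L)"
    and "distributed M lborel y2 (gamma_density L)"
  shows "prob_space.expectation M (\<lambda>\<omega>. ln (1 + \<alpha> * z \<omega> / (1 + \<delta>1 * y1 \<omega> + \<delta>2 * y2 \<omega>)))
       = (\<Sum>i = 0..N - L - 1. \<Sum>j \<in> {1, 2}. \<Sum>k = 0..L - 1. \<Sum>l = 0..i.
            coef L \<delta>1 \<delta>2 j k * fact (l + k) / (fact l * fact (i - l))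
            * \<alpha> powi (int l + int k - int i + 1)
            * I1 (1 / \<alpha>) (\<alpha> / delta \<delta>1 \<delta>2 j) i (l + k + 1))"
proof -
  interpret prob_space M by fact
  define n where "n = N - L"
  have n: "1 \<le> n" using assms(2,3) by (simp add: n_def)
  define F where "F x = indicator {0..} x / (1+x) * Tfun n L \<delta>1 \<delta>2 \<alpha> x" for x :: real
  define f where "f \<omega> = ln (1 + \<alpha> * z \<omega> / (1 + \<delta>1 * y1 \<omega> + \<delta>2 * y2 \<omega>))" for \<omega>
  define ft where "ft i j k l x = indicator {0<..} x *\<^sub>R (x^i * exp (-(1/\<alpha>)*x) / ((x + \<alpha> / delta \<delta>1 \<delta>2 j)^(l+k+1) * (x+1)))"
    for i j k l :: nat and x :: real
  define c where "c i j k l = coef L \<delta>1 \<delta>2 j k * fact (l + k) / (fact l * fact (i - l)) * \<alpha> powi (int l + int k - int i + 1)"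
    for i j k l :: nat
  have nnE: "(\<integral>\<^sup>+ \<omega>. ennreal (f \<omega>) \<partial>M) = (\<integral>\<^sup>+ x. ennreal (F x) \<partial>lborel)"
    unfolding f_def F_def n_def by (rule expect_nn[OF assms(1-6) assms(8-11)])
  have zm[measurable]: "z \<in> borel_measurable M" using distributed_measurable[OF assms(9)] by simp
  have y1m[measurable]: "y1 \<in> borel_measurable M" using distributed_measurable[OF assms(10)] by simp
  have y2m[measurable]: "y2 \<in> borel_measurable M" using distributed_measurable[OF assms(11)] by simp
  have fm: "f \<in> borel_measurable M" unfolding f_def by measurable
  have fAE: "AE \<omega> in M. 0 \<le> f \<omega>"
    using gamma_AE_nonneg[OF assms(9)] gamma_AE_nonneg[OF assms(10)] gamma_AE_nonneg[OF assms(11)]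
  proof eventually_elim
    case (elim \<omega>)
    have "0 < 1 + \<delta>1 * y1 \<omega> + \<delta>2 * y2 \<omega>" using elim assms(5,6) by (smt (verit) mult_nonneg_nonneg)
    moreover have "0 \<le> \<alpha> * z \<omega>" using elim assms(4) by simp
    ultimately have "0 \<le> \<alpha> * z \<omega> / (1 + \<delta>1 * y1 \<omega> + \<delta>2 * y2 \<omega>)" by simp
    then show ?case unfolding f_def by simp
  qed
  have Fm: "F \<in> borel_measurable lborel" unfolding F_def Tfun_def Pm_def Aa_def by measurable
  have Fnn: "0 \<le> F x" for x
    unfolding F_def using Tfun_nonneg[of x \<alpha> \<delta>1 \<delta>2 n L] assms(4-6) by (cases "x \<ge> 0") auto
  have "integral\<^sup>L M f = enn2real (\<integral>\<^sup>+ \<omega>. ennreal (f \<omega>) \<partial>M)"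
    by (rule integral_eq_nn_integral[OF fm fAE])
  also have "\<dots> = enn2real (\<integral>\<^sup>+ x. ennreal (F x) \<partial>lborel)" unfolding nnE ..
  also have "\<dots> = integral\<^sup>L lborel F"
    by (rule integral_eq_nn_integral[symmetric, OF Fm]) (simp add: Fnn)
  also have "\<dots> = integral\<^sup>L lborel (\<lambda>x. \<Sum>i = 0..n - 1. \<Sum>j \<in> {1, 2}. \<Sum>k = 0..L - 1. \<Sum>l = 0..i. c i j k l * ft i j k l x)"
  proof (rule integral_cong_AE)
    show "F \<in> borel_measurable lborel" by (rule Fm)
    show "(\<lambda>x. \<Sum>i = 0..n - 1. \<Sum>j \<in> {1, 2}. \<Sum>k = 0..L - 1. \<Sum>l = 0..i. c i j k l * ft i j k l x) \<in> borel_measurable lborel"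
      unfolding c_def ft_def by measurable
    show "AE x in lborel. F x = (\<Sum>i = 0..n - 1. \<Sum>j \<in> {1, 2}. \<Sum>k = 0..L - 1. \<Sum>l = 0..i. c i j k l * ft i j k l x)"
      using AE_lborel_singleton[of 0]
    proof eventually_elim
      case (elim x)
      show ?case
      proof (cases "x > 0")
        case True
        show ?thesis unfolding F_def c_def ft_def
          using F_pointwise[OF True assms(4,2,5,6,7) n] by (simp add: mult.assoc)
      next
        case False
        then show ?thesis unfolding F_def c_def ft_def using elim by simp
      qed
    qed
  qed
  also have "\<dots> = (\<Sum>i = 0..n - 1. \<Sum>j \<in> {1, 2}. \<Sum>k = 0..L - 1. \<Sum>l = 0..i. c i j k l * integral\<^sup>L lborel (ft i j k l))"
  proof -
    have int: "integrable lborel (ft i j k l)" for i j k l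
    proof -
      have "\<alpha> / delta \<delta>1 \<delta>2 j > 0" using assms(4-6) by (simp add: delta_def)
      from term_integrable[OF assms(4) this, of i "l+k+1"] show ?thesis
        unfolding set_integrable_def ft_def .
    qed
    show ?thesis by (simp add: int integral_sum integrable_sum)
  qed
  also have "\<dots> = (\<Sum>i = 0..N - L - 1. \<Sum>j \<in> {1, 2}. \<Sum>k = 0..L - 1. \<Sum>l = 0..i.
            coef L \<delta>1 \<delta>2 j k * fact (l + k) / (fact l * fact (i - l))
            * \<alpha> powi (int l + int k - int i + 1)
            * I1 (1 / \<alpha>) (\<alpha> / delta \<delta>1 \<delta>2 j) i (l + k + 1))"
    unfolding n_def c_def ft_def I1_def set_lebesgue_integral_def by simp
  finally show ?thesis unfolding f_def .
qed


end
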